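(* Let $\chi$ be a character of $T$ of minimal depth $r\in\mathbb{Z}_{\ge0}$. Then for every integer $d\ge r+1$, $$\dim_{\mathbb{C}}\mathrm{Hom}_{\mathcal{K}}(V_\chi^{\mathcal{K}_d},V_\chi^{\mathcal{K}_d})=\begin{cases}d+1&\text{if } r=0 \text{ and } \chi|_{S_0}=\mathbbm{1},\\ d-r&\text{otherwise}.\end{cases}$$
   Context: Let $F$ be a non-archimedean local field with odd residual characteristic, ring of integers $\mathcal{O}_F$, maximal ideal $\mathfrak{p}_F$. Fix a non-square $\epsilon\in\mathcal{O}_F^\times$, $E=F[\sqrt\epsilon]$ with ring of integers $\mathcal{O}_E$, maximal ideal $\mathfrak{p}_E$; $\overline{x}$ is Galois conjugation. $G=\{g\in\mathrm{GL}_2(E):\overline{g}^{\top}\mathrm{w}g=\mathrm{w}\}$, $\mathrm{w}=\begin{pmatrix}0&1\\1&0\end{pmatrix}$; $\mathcal{K}=G\cap M_2(\mathcal{O}_E)$, $\mathcal{K}_n=\{g\in\mathcal{K}:g\equiv I\bmod\mathfrak{p}_E^n\}$. $B$ upper triangular matrices in $G$; $T=\{t(a)=\mathrm{diag}(a,\overline a^{-1}):a\in E^\times\}$; $U=\{\begin{pmatrix}1&\sqrt\epsilon b\\0&1\end{pmatrix}:b\in F\}$. $T_0=\{t(a):a\in\mathcal{O}_E^\times\}$, $T_n=\{t(a):a\in1+\mathfrak{p}_E^n\}$ ($n\ge1$); $S=\{\mathrm{diag}(a,a^{-1}):a\in F^\times\}$, $S_0$ ($a\in\mathcal{O}_F^\times$),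 $S_n$ ($a\in1+\mathfrak{p}_F^n$). A character $\chi$ of $T$ has depth $r$ if $\chi|_{T_r}\ne\mathbbm{1}$, $\chi|_{T_{r+1}}=\mathbbm{1}$ (trivial on $T_0$ also counts as depth $0$); true depth = depth of $\chi|_S$; minimal depth $r$ means depth and true depth both equal $r$. $\pi_\chi=\mathrm{Ind}_B^G\chi$ ($\chi$ extended trivially on $U$) acts by right translation on the space $V_\chi$ of locally constant $f:G\to\mathbb{C}$ with $f(bg)=\chi(b)f(g)$, $b\in B$; $V_\chi^{\mathcal{K}_n}$ is the $\mathcal{K}$-subrepresentation of $\mathcal{K}_n$-fixed vectors. *)

theory Defs
  imports Complex_Main "HOL-Library.Function_Algebras"
begin

datatype 'a mat2 = M2 'a 'a 'a 'a  (* M2 a b c d  is the matrix  [[a, b], [c, d]] *)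

fun mmul :: "'a::ring mat2 \<Rightarrow> 'a mat2 \<Rightarrow> 'a mat2" where
  "mmul (M2 a b c d) (M2 a' b' c' d') =
     M2 (a*a' + b*c') (a*b' + b*d') (c*a' + d*c') (c*b' + d*d')"

fun mdet :: "'a::comm_ring mat2 \<Rightarrow> 'a" where
  "mdet (M2 a b c d) = a*d - b*c"

definition wmat :: "'a::ring_1 mat2" where "wmat = M2 0 1 1 0"

definition Imat :: "'a::ring_1 mat2" where "Imat = M2 1 0 0 1"

text \<open>conjugate transpose, cj = Galois conjugation of E/F\<close>
fun cjT :: "('a \<Rightarrow> 'a) \<Rightarrow> 'a mat2 \<Rightarrow> 'a mat2" where
  "cjT cj (M2 a b c d) = M2 (cj a) (cj c) (cj b) (cj d)"

fun entries :: "'a mat2 \<Rightarrow> 'a set" where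
  "entries (M2 a b c d) = {a, b, c, d}"

fun msub :: "'a::ab_group_add mat2 \<Rightarrow> 'a mat2 \<Rightarrow> 'a mat2" where
  "msub (M2 a b c d) (M2 a' b' c' d') = M2 (a-a') (b-b') (c-c') (d-d')"

fun ent11 :: "'a mat2 \<Rightarrow> 'a" where "ent11 (M2 a b c d) = a"
fun ent21 :: "'a mat2 \<Rightarrow> 'a" where "ent21 (M2 a b c d) = c"

section \<open>Valuation-theoretic notions on E (v is the normalized valuation of E, used on nonzero elements)\<close>

text \<open>membership in p_E^n (for n = 0 this is O_E)\<close>
definition inP :: "('e::field \<Rightarrow> int) \<Rightarrow> nat \<Rightarrow> 'e \<Rightarrow> bool" where
  "inP v n x \<longleftrightarrow> x = 0 \<or> int n \<le> v x"

definition v_cauchy :: "('e::field \<Rightarrow> int) \<Rightarrow> (nat \<Rightarrow> 'e) \<Rightarrow> bool" where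
  "v_cauchy v X \<longleftrightarrow> (\<forall>N. \<exists>M. \<forall>m\<ge>M. \<forall>n\<ge>M. inP v N (X m - X n))"

definition v_converges :: "('e::field \<Rightarrow> int) \<Rightarrow> (nat \<Rightarrow> 'e) \<Rightarrow> 'e \<Rightarrow> bool" where
  "v_converges v X L \<longleftrightarrow> (\<forall>N. \<exists>M. \<forall>n\<ge>M. inP v N (X n - L))"

text \<open>
  The standing setup: E is a field with a Galois involution cj whose fixed field is F,
  v is a discrete valuation on E normalized so that v(E^x) = Z, E is complete with
  finite residue field of odd characteristic (so E and F are non-archimedean local
  fields), eps is a unit of O_F which is a non-square in F, and s is a square root of
  eps in E with cj s = - s (so E = F[sqrt eps] is the unramified quadratic extension;
  a uniformizer of E can be taken in F).\<close>
definition unram_setup :: "('e::field \<Rightarrow> 'e) \<Rightarrow> ('e \<Rightarrow> int) \<Rightarrow> 'e \<Rightarrow> 'e \<Rightarrow> bool" where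
  "unram_setup cj v eps s \<longleftrightarrow>
     (\<forall>x y. cj (x + y) = cj x + cj y) \<and> (\<forall>x y. cj (x * y) = cj x * cj y) \<and>
     cj 1 = 1 \<and> (\<forall>x. cj (cj x) = x) \<and>
     (\<forall>x y. x \<noteq> 0 \<longrightarrow> y \<noteq> 0 \<longrightarrow> v (x * y) = v x + v y) \<and>
     (\<forall>x y. x \<noteq> 0 \<longrightarrow> y \<noteq> 0 \<longrightarrow> x + y \<noteq> 0 \<longrightarrow> min (v x) (v y) \<le> v (x + y)) \<and>
     (\<forall>x. x \<noteq> 0 \<longrightarrow> v (cj x) = v x) \<and>
     (\<exists>\<pi>. \<pi> \<noteq> 0 \<and> cj \<pi> = \<pi> \<and> v \<pi> = 1) \<and>
     (\<forall>X. v_cauchy v X \<longrightarrow> (\<exists>L. v_converges v X L)) \<and>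
     (\<exists>R. finite R \<and> (\<forall>x. inP v 0 x \<longrightarrow> (\<exists>r\<in>R. inP v 1 (x - r)))) \<and>
     (2::'e) \<noteq> 0 \<and> v 2 = 0 \<and>
     eps \<noteq> 0 \<and> cj eps = eps \<and> v eps = 0 \<and> \<not> (\<exists>y. cj y = y \<and> y * y = eps) \<and>
     s * s = eps \<and> cj s = - s"

definition inG :: "('e::field \<Rightarrow> 'e) \<Rightarrow> 'e mat2 \<Rightarrow> bool" where
  "inG cj g \<longleftrightarrow> mdet g \<noteq> 0 \<and> mmul (cjT cj g) (mmul wmat g) = wmat"

definition Kgrp :: "('e::field \<Rightarrow> 'e) \<Rightarrow> ('e \<Rightarrow> int) \<Rightarrow> 'e mat2 set" where
  "Kgrp cj v = {g. inG cj g \<and> (\<forall>x\<in>entries g. inP v 0 x)}"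

definition Kn :: "('e::field \<Rightarrow> 'e) \<Rightarrow> ('e \<Rightarrow> int) \<Rightarrow> nat \<Rightarrow> 'e mat2 set" where
  "Kn cj v n = {g \<in> Kgrp cj v. \<forall>x\<in>entries (msub g Imat). inP v n x}"

definition Bgrp :: "('e::field \<Rightarrow> 'e) \<Rightarrow> 'e mat2 set" where
  "Bgrp cj = {g. inG cj g \<and> ent21 g = 0}"

section \<open>Characters of T = {t(a) = diag(a, cj(a)^-1)}, identified with functions on E^x\<close>

definition is_char :: "('e::field \<Rightarrow> complex) \<Rightarrow> bool" where
  "is_char chi \<longleftrightarrow> (\<forall>a. a \<noteq> 0 \<longrightarrow> chi a \<noteq> 0) \<and>
     (\<forall>a b. a \<noteq> 0 \<longrightarrow> b \<noteq> 0 \<longrightarrow> chi (a * b) = chi a * chi b)"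

definition Tmem :: "('e::field \<Rightarrow> int) \<Rightarrow> nat \<Rightarrow> 'e \<Rightarrow> bool" where
  "Tmem v n a \<longleftrightarrow> a \<noteq> 0 \<and> (if n = 0 then v a = 0 else inP v n (a - 1))"

text \<open>depth of chi restricted to the subgroup {t(a) : P a} (P = True gives T, P = "a in F" gives S,
  since t(a) = diag(a, a^-1) for a in F)\<close>
definition has_depth :: "('e::field \<Rightarrow> bool) \<Rightarrow> ('e \<Rightarrow> int) \<Rightarrow> ('e \<Rightarrow> complex) \<Rightarrow> nat \<Rightarrow> bool" where
  "has_depth P v chi r \<longleftrightarrow>
     ((\<exists>a. P a \<and> Tmem v r a \<and> chi a \<noteq> 1) \<and> (\<forall>a. P a \<and> Tmem v (Suc r) a \<longrightarrow> chi a = 1)) \<or>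
     (r = 0 \<and> (\<forall>a. P a \<and> Tmem v 0 a \<longrightarrow> chi a = 1))"

definition minimal_depth :: "('e::field \<Rightarrow> 'e) \<Rightarrow> ('e \<Rightarrow> int) \<Rightarrow> ('e \<Rightarrow> complex) \<Rightarrow> nat \<Rightarrow> bool" where
  "minimal_depth cj v chi r \<longleftrightarrow> has_depth (\<lambda>_. True) v chi r \<and> has_depth (\<lambda>a. cj a = a) v chi r"

text \<open>chi extended to B = TU trivially on U: chi(b) = chi(upper-left entry of b)\<close>
definition rtrans :: "'e::ring mat2 \<Rightarrow> ('e mat2 \<Rightarrow> complex) \<Rightarrow> ('e mat2 \<Rightarrow> complex)" where
  "rtrans k f = (\<lambda>g. f (mmul g k))"

text \<open>functions on G are represented as functions on all matrices vanishing off G;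
  local constancy w.r.t. the topology of G, which has the g K_n as a neighbourhood basis at g\<close>
definition Vchi :: "('e::field \<Rightarrow> 'e) \<Rightarrow> ('e \<Rightarrow> int) \<Rightarrow> ('e \<Rightarrow> complex) \<Rightarrow> ('e mat2 \<Rightarrow> complex) set" where
  "Vchi cj v chi = {f.
     (\<forall>g. \<not> inG cj g \<longrightarrow> f g = 0) \<and>
     (\<forall>b\<in>Bgrp cj. \<forall>g. inG cj g \<longrightarrow> f (mmul b g) = chi (ent11 b) * f g) \<and>
     (\<forall>g. inG cj g \<longrightarrow> (\<exists>n. \<forall>k\<in>Kn cj v n. f (mmul g k) = f g))}"

definition Vfix :: "('e::field \<Rightarrow> 'e) \<Rightarrow> ('e \<Rightarrow> int) \<Rightarrow> ('e \<Rightarrow> complex) \<Rightarrow> nat \<Rightarrow> ('e mat2 \<Rightarrow> complex) set" where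
  "Vfix cj v chi n = {f \<in> Vchi cj v chi. \<forall>k\<in>Kn cj v n. rtrans k f = f}"

text \<open>Hom_K(W, W) for a K-stable subspace W: K-equivariant C-linear maps W -> W
  (extended by 0 outside W)\<close>
definition HomK :: "('e::field \<Rightarrow> 'e) \<Rightarrow> ('e \<Rightarrow> int) \<Rightarrow> ('e mat2 \<Rightarrow> complex) set \<Rightarrow>
    (('e mat2 \<Rightarrow> complex) \<Rightarrow> ('e mat2 \<Rightarrow> complex)) set" where
  "HomK cj v W = {\<phi>.
     (\<forall>f\<in>W. \<phi> f \<in> W) \<and> (\<forall>f. f \<notin> W \<longrightarrow> \<phi> f = 0) \<and>
     (\<forall>f\<in>W. \<forall>h\<in>W. \<phi> (f + h) = \<phi> f + \<phi> h) \<and>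
     (\<forall>c. \<forall>f\<in>W. \<phi> (\<lambda>g. c * f g) = (\<lambda>g. c * \<phi> f g)) \<and>
     (\<forall>k\<in>Kgrp cj v. \<forall>f\<in>W. \<phi> (rtrans k f) = rtrans k (\<phi> f))}"

definition cdimH :: "(('a \<Rightarrow> complex) \<Rightarrow> ('a \<Rightarrow> complex)) set \<Rightarrow> nat" where
  "cdimH S = vector_space.dim (\<lambda>(c::complex) \<phi>. \<lambda>f g. c * \<phi> f g) S"

end

theory Submission
  imports Defs
begin

locale vs =
  fixes cj :: "'e::field \<Rightarrow> 'e" and v :: "'e \<Rightarrow> int" and eps s :: 'e
  assumes S: "unram_setup cj v eps s"
begin

lemma cj_add: "cj (x + y) = cj x + cj y" using S by (simp add: unram_setup_def)
lemma cj_mult: "cj (x * y) = cj x * cj y" using S by (simp add: unram_setup_def)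
lemma cj_one[simp]: "cj 1 = 1" using S by (simp add: unram_setup_def)
lemma cj_cj[simp]: "cj (cj x) = x" using S by (simp add: unram_setup_def)
lemma v_mult: "x \<noteq> 0 \<Longrightarrow> y \<noteq> 0 \<Longrightarrow> v (x * y) = v x + v y" using S by (simp add: unram_setup_def)
lemma v_ultra: "x \<noteq> 0 \<Longrightarrow> y \<noteq> 0 \<Longrightarrow> x + y \<noteq> 0 \<Longrightarrow> min (v x) (v y) \<le> v (x + y)"
  using S by (simp add: unram_setup_def)
lemma v_cj: "x \<noteq> 0 \<Longrightarrow> v (cj x) = v x" using S by (simp add: unram_setup_def)
lemma pi_ex: "\<exists>\<pi>. \<pi> \<noteq> 0 \<and> cj \<pi> = \<pi> \<and> v \<pi> = 1" using S by (simp add: unram_setup_def)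
lemma resfin: "\<exists>R. finite R \<and> (\<forall>x. inP v 0 x \<longrightarrow> (\<exists>r\<in>R. inP v 1 (x - r)))"
  using S by (simp add: unram_setup_def)
lemma two_nz: "(2::'e) \<noteq> 0" using S by (simp add: unram_setup_def)
lemma v_two: "v 2 = 0" using S by (simp add: unram_setup_def)
lemma eps_nz: "eps \<noteq> 0" using S by (simp add: unram_setup_def)
lemma cj_eps: "cj eps = eps" using S by (simp add: unram_setup_def)
lemma v_eps: "v eps = 0" using S by (simp add: unram_setup_def)
lemma ss: "s * s = eps" using S by (simp add: unram_setup_def)
lemma cj_s: "cj s = - s" using S by (simp add: unram_setup_def)

lemma cj_zero[simp]: "cj 0 = 0"
  by (metis add_cancel_right_right add_0 cj_add)
lemma cj_uminus: "cj (- x) = - cj x"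
  using cj_add[of x "-x"] by (simp add: eq_neg_iff_add_eq_0 add.commute)
lemma cj_diff: "cj (x - y) = cj x - cj y"
  using cj_add[of x "-y"] cj_uminus[of y] by simp
lemma cj_eq0[simp]: "cj x = 0 \<longleftrightarrow> x = 0"
  by (metis cj_cj cj_zero)
lemma cj_inverse: "cj (inverse x) = inverse (cj x)"
proof (cases "x = 0")
  case False
  have "cj (inverse x) * cj x = 1" using cj_mult[of "inverse x" x] False by simp
  then show ?thesis using False by (simp add: field_simps)
qed simp
lemma cj_divide: "cj (x / y) = cj x / cj y"
  by (simp add: divide_inverse cj_mult cj_inverse)
lemma cj_power: "cj (x ^ n) = cj x ^ n"
  by (induction n) (simp_all add: cj_mult)
lemma cj_numeral2: "cj 2 = 2"
  by (metis cj_add cj_one one_add_one)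

lemmas cj_simps = cj_add cj_mult cj_uminus cj_diff cj_inverse cj_divide cj_power cj_eps cj_s

lemma v_one[simp]: "v 1 = 0"
  using v_mult[of 1 1] by simp
lemma v_m1: "v (-1) = 0"
  using v_mult[of "-1" "-1"] by simp
lemma v_uminus[simp]: "v (- x) = v x"
proof (cases "x = 0")
  case False
  then show ?thesis using v_mult[of "-1" x] v_m1 by simp
qed simp
lemma v_inverse: "x \<noteq> 0 \<Longrightarrow> v (inverse x) = - v x"
  using v_mult[of x "inverse x"] by simp
lemma v_divide: "x \<noteq> 0 \<Longrightarrow> y \<noteq> 0 \<Longrightarrow> v (x / y) = v x - v y"
  by (simp add: divide_inverse v_mult v_inverse)
lemma v_power: "x \<noteq> 0 \<Longrightarrow> v (x ^ n) = int n * v x"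
  by (induction n) (simp_all add: v_mult algebra_simps)

definition pi :: 'e where "pi = (SOME \<pi>. \<pi> \<noteq> 0 \<and> cj \<pi> = \<pi> \<and> v \<pi> = 1)"
lemma pi: "pi \<noteq> 0" "cj pi = pi" "v pi = 1"
  using someI_ex[OF pi_ex] unfolding pi_def by auto

lemma s_nz: "s \<noteq> 0" using ss eps_nz by auto
lemma v_s: "v s = 0" using v_mult[of s s] ss v_eps s_nz by simp

abbreviation P :: "nat \<Rightarrow> 'e \<Rightarrow> bool" where "P n x \<equiv> inP v n x"
abbreviation Oi :: "'e \<Rightarrow> bool" where "Oi x \<equiv> inP v 0 x"
definition unit :: "'e \<Rightarrow> bool" where "unit x \<longleftrightarrow> x \<noteq> 0 \<and> v x = 0"

lemma P_0[simp]: "P n 0" by (simp add: inP_def)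
lemma P_add: assumes "P n x" "P n y" shows "P n (x + y)"
proof (cases "x = 0 \<or> y = 0 \<or> x + y = 0")
  case True then show ?thesis using assms by (auto simp: inP_def)
next
  case False
  then have "min (v x) (v y) \<le> v (x + y)" using v_ultra[of x y] by blast
  moreover have "int n \<le> v x" "int n \<le> v y" using assms False by (auto simp: inP_def)
  ultimately show ?thesis by (auto simp: inP_def min_def split: if_splits)
qed
lemma P_uminus: "P n x \<Longrightarrow> P n (- x)" by (simp add: inP_def)
lemma P_uminus_iff[simp]: "P n (- x) = P n x" by (simp add: inP_def)
lemma P_diff: "P n x \<Longrightarrow> P n y \<Longrightarrow> P n (x - y)"
  using P_add[of n x "-y"] by simp
lemma P_mult: "P n x \<Longrightarrow> P m y \<Longrightarrow> P (n + m) (x * y)"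
  unfolding inP_def by (cases "x = 0"; cases "y = 0") (auto simp: v_mult)
lemma P_multO: "P n x \<Longrightarrow> Oi y \<Longrightarrow> P n (x * y)"
  using P_mult[of n x 0 y] by simp
lemma P_Omult: "Oi x \<Longrightarrow> P n y \<Longrightarrow> P n (x * y)"
  using P_mult[of 0 x n y] by simp
lemma P_mono: "m \<le> n \<Longrightarrow> P n x \<Longrightarrow> P m x"
  unfolding inP_def by auto
lemma P_O: "P n x \<Longrightarrow> Oi x" using P_mono[of 0 n] by simp
lemma P_cj: "P n (cj x) = P n x"
  unfolding inP_def by (cases "x = 0") (auto simp: v_cj)
lemma O_1[simp]: "Oi 1" by (simp add: inP_def)
lemma O_m1[simp]: "Oi (-1)" by (simp add: inP_def)
lemma P_iff: "P n x \<longleftrightarrow> x = 0 \<or> int n \<le> v x" by (simp add: inP_def)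
lemma O_s: "Oi s" "Oi eps" "Oi pi"
  by (simp_all add: inP_def v_s v_eps pi)
lemma O_sum: "finite A \<Longrightarrow> (\<And>a. a \<in> A \<Longrightarrow> P n (f a)) \<Longrightarrow> P n (sum f A)"
  by (induction A rule: finite_induct) (auto intro: P_add)
lemma O_2: "Oi 2" by (simp add: inP_def v_two)

lemma unit_O: "unit x \<Longrightarrow> Oi x" by (simp add: unit_def inP_def)
lemma unit_nz: "unit x \<Longrightarrow> x \<noteq> 0" by (simp add: unit_def)
lemma unit_inverse: "unit x \<Longrightarrow> unit (inverse x)" by (simp add: unit_def v_inverse)
lemma unit_mult: "unit x \<Longrightarrow> unit y \<Longrightarrow> unit (x * y)" by (simp add: unit_def v_mult)
lemma unit_cj: "unit x \<Longrightarrow> unit (cj x)" by (simp add: unit_def v_cj)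
lemma unit_cj_iff: "unit (cj x) = unit x" by (metis cj_cj unit_cj)
lemma unit_1[simp]: "unit 1" by (simp add: unit_def)
lemma unit_s: "unit s" "unit eps" "unit 2" "unit (-1)"
  by (simp_all add: unit_def v_s s_nz v_eps eps_nz two_nz v_two v_m1)
lemma unit_uminus: "unit (- x) = unit x" by (simp add: unit_def)
lemma unit_divide: "unit x \<Longrightarrow> unit y \<Longrightarrow> unit (x / y)"
  by (simp add: divide_inverse unit_mult unit_inverse)
lemma P_div_unit: "P n x \<Longrightarrow> unit y \<Longrightarrow> P n (x / y)"
  using P_multO[of n x "inverse y"] unit_inverse[of y] unit_O by (simp add: divide_inverse)
lemma O_unit_factor: "Oi x \<Longrightarrow> Oi y \<Longrightarrow> unit (x * y) \<Longrightarrow> unit x"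
  unfolding unit_def inP_def by (auto simp: v_mult)
lemma not_unit_P1: "Oi x \<Longrightarrow> \<not> unit x \<Longrightarrow> P 1 x"
  unfolding unit_def inP_def by auto
lemma unit_not_P1: "unit x \<Longrightarrow> \<not> P 1 x"
  unfolding unit_def inP_def by auto

lemma unit_perturb: assumes "unit x" "P 1 y" shows "unit (x + y)"
proof -
  have nz: "x + y \<noteq> 0"
  proof
    assume "x + y = 0" then have "y = - x" by (simp add: add_eq_0_iff)
    then show False using assms unfolding unit_def inP_def by auto
  qed
  have O1: "Oi (x + y)" using assms P_add[of 0 x y] P_O unit_O by blast
  show ?thesis
  proof (rule ccontr)
    assume "\<not> unit (x + y)"
    then have "P 1 (x + y)" using not_unit_P1 O1 by blast
    then have "P 1 ((x + y) - y)" using P_diff assms(2) by blast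
    then show False using assms(1) unit_not_P1 by simp
  qed
qed
lemma unit_perturb': "unit x \<Longrightarrow> P 1 (y - x) \<Longrightarrow> unit y"
  using unit_perturb[of x "y - x"] by simp

lemma P_pi_pow: "P n (pi ^ n)"
  by (simp add: inP_def v_power pi)
lemma unit_pi_pow_iff: "v (pi ^ n) = int n" by (simp add: v_power pi)
lemma P_pi_factor: assumes "P n x" shows "Oi (x / pi ^ n)"
  using assms pi unfolding inP_def by (cases "x = 0") (auto simp: v_divide v_power)
lemma P_pi_mult: "Oi x \<Longrightarrow> P n (pi ^ n * x)"
  using P_mult[of n "pi^n" 0 x] P_pi_pow by simp

end

lemma mmul_assoc: "mmul (mmul a b) c = mmul a (mmul b (c::'a::ring mat2))"
  by (cases a; cases b; cases c) (simp add: algebra_simps)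
lemma mmul_I[simp]: "mmul Imat g = (g::'a::ring_1 mat2)" "mmul g Imat = g"
  by (cases g; simp add: Imat_def)+
lemma mdet_mmul: "mdet (mmul g h) = mdet g * mdet (h::'a::comm_ring mat2)"
  by (cases g; cases h) (simp add: algebra_simps)

lemma lr_inverse:
  fixes A B :: "'a::field mat2"
  assumes "mmul A B = Imat" shows "mmul B A = Imat"
proof -
  obtain a b c d where A: "A = M2 a b c d" by (cases A)
  obtain p q r t where B: "B = M2 p q r t" by (cases B)
  have e: "a*p + b*r = 1" "a*q + b*t = 0" "c*p + d*r = 0" "c*q + d*t = 1"
    using assms A B by (auto simp: Imat_def)
  define D where "D = a*d - b*c"
  have "(a*p + b*r)*(c*q + d*t) - (a*q + b*t)*(c*p + d*r) = D * (p*t - q*r)"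
    unfolding D_def by (simp add: algebra_simps)
  then have D1: "D * (p*t - q*r) = 1" using e by simp
  then have Dnz: "D \<noteq> 0" by auto
  have "D * p = d*(a*p + b*r) - b*(c*p + d*r)" unfolding D_def by (simp add: algebra_simps)
  then have p: "D * p = d" using e by simp
  have "D * q = d*(a*q + b*t) - b*(c*q + d*t)" unfolding D_def by (simp add: algebra_simps)
  then have q: "D * q = - b" using e by simp
  have "D * r = a*(c*p + d*r) - c*(a*p + b*r)" unfolding D_def by (simp add: algebra_simps)
  then have r: "D * r = - c" using e by simp
  have "D * t = a*(c*q + d*t) - c*(a*q + b*t)" unfolding D_def by (simp add: algebra_simps)
  then have t: "D * t = a" using e by simp
  have x1: "D * (p*a + q*c) = (D*p)*a + (D*q)*c" by (simp add: algebra_simps)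
  have x2: "D * (p*b + q*d) = (D*p)*b + (D*q)*d" by (simp add: algebra_simps)
  have x3: "D * (r*a + t*c) = (D*r)*a + (D*t)*c" by (simp add: algebra_simps)
  have x4: "D * (r*b + t*d) = (D*r)*b + (D*t)*d" by (simp add: algebra_simps)
  have "D * (p*a + q*c) = D" unfolding x1 p q unfolding D_def by (simp add: algebra_simps)
  moreover have "D * (p*b + q*d) = 0" unfolding x2 p q by (simp add: algebra_simps)
  moreover have "D * (r*a + t*c) = 0" unfolding x3 r t by (simp add: algebra_simps)
  moreover have "D * (r*b + t*d) = D" unfolding x4 r t unfolding D_def by (simp add: algebra_simps)
  ultimately show ?thesis using Dnz A B by (simp add: Imat_def)
qed

fun ent22 :: "'a mat2 \<Rightarrow> 'a" where "ent22 (M2 a b c d) = d"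
fun ent12 :: "'a mat2 \<Rightarrow> 'a" where "ent12 (M2 a b c d) = b"

context vs begin

definition nm :: "'e \<Rightarrow> 'e mat2" where "nm y = M2 1 0 y 1"
definition um :: "'e \<Rightarrow> 'e mat2" where "um z = M2 1 z 0 1"
definition tm :: "'e \<Rightarrow> 'e mat2" where "tm a = M2 a 0 0 (inverse (cj a))"
definition ginv :: "'e mat2 \<Rightarrow> 'e mat2" where
  "ginv g = (case g of M2 a b c e \<Rightarrow> M2 (cj e) (cj b) (cj c) (cj a))"

lemma ginv_M2[simp]: "ginv (M2 a b c e) = M2 (cj e) (cj b) (cj c) (cj a)"
  by (simp add: ginv_def)
lemma ginv_ginv[simp]: "ginv (ginv g) = g"
  by (cases g) simp

abbreviation G :: "'e mat2 \<Rightarrow> bool" where "G g \<equiv> inG cj g"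

lemma inG_iff: "G (M2 a b c e) \<longleftrightarrow> a*e - b*c \<noteq> 0 \<and> cj a * c + cj c * a = 0 \<and>
   cj a * e + cj c * b = 1 \<and> cj b * c + cj e * a = 1 \<and> cj b * e + cj e * b = 0"
  by (auto simp: inG_def wmat_def)

lemma ginv_left: "G g \<Longrightarrow> mmul (ginv g) g = Imat"
  by (cases g) (auto simp: inG_iff Imat_def algebra_simps)

lemma ginv_right: "G g \<Longrightarrow> mmul g (ginv g) = Imat"
  using lr_inverse ginv_left by blast

lemma G_right_eqs: assumes "G (M2 a b c e)"
  shows "a * cj e + b * cj c = 1" "a * cj b + b * cj a = 0" "c * cj e + e * cj c = 0"
    "c * cj b + e * cj a = 1"
  using ginv_right[OF assms] by (auto simp: Imat_def)

lemma G_det: "G g \<Longrightarrow> mdet g \<noteq> 0" by (simp add: inG_def)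

lemma cjT_mmul: "cjT cj (mmul g h) = mmul (cjT cj h) (cjT cj g)"
  by (cases g; cases h) (simp add: cj_add cj_mult algebra_simps)

lemma G_mmul: assumes "G g" "G h" shows "G (mmul g h)"
proof -
  have g: "mmul (cjT cj g) (mmul wmat g) = wmat" and h: "mmul (cjT cj h) (mmul wmat h) = wmat"
    using assms by (auto simp: inG_def)
  have "mmul (cjT cj (mmul g h)) (mmul wmat (mmul g h))
      = mmul (cjT cj h) (mmul (mmul (cjT cj g) (mmul wmat g)) h)"
    by (simp add: cjT_mmul mmul_assoc)
  also have "\<dots> = wmat" using g h by simp
  finally show ?thesis using assms by (simp add: inG_def mdet_mmul)
qed

lemma G_ginv: assumes "G g" shows "G (ginv g)"
proof -
  obtain a b c e where g: "g = M2 a b c e" by (cases g)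
  have r: "a * cj e + b * cj c = 1" "a * cj b + b * cj a = 0" "c * cj e + e * cj c = 0"
    "c * cj b + e * cj a = 1" using G_right_eqs assms g by auto
  have "a*e - b*c \<noteq> 0" using assms g by (simp add: inG_iff)
  then have "cj e * cj a - cj b * cj c \<noteq> 0"
    by (metis cj_diff cj_eq0 cj_mult mult.commute)
  then show ?thesis using r g by (simp add: inG_iff algebra_simps)
qed

lemma G_I: "G Imat" unfolding inG_def Imat_def wmat_def by simp

lemma G_nm: "G (nm y) \<longleftrightarrow> y + cj y = 0"
  by (auto simp: nm_def inG_iff add.commute)
lemma G_um: "G (um z) \<longleftrightarrow> z + cj z = 0"
  by (auto simp: um_def inG_iff add.commute)
lemma G_tm: "G (tm a) \<longleftrightarrow> a \<noteq> 0"
  by (auto simp: tm_def inG_iff cj_inverse)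

lemma G_bottom_iso: assumes "G (M2 a b c e)" shows "c * cj e + e * cj c = 0"
  using G_right_eqs[OF assms] by simp

definition allO :: "'e mat2 \<Rightarrow> bool" where "allO g \<longleftrightarrow> (\<forall>x\<in>entries g. Oi x)"
lemma allO_M2[simp]: "allO (M2 a b c e) \<longleftrightarrow> Oi a \<and> Oi b \<and> Oi c \<and> Oi e"
  by (simp add: allO_def)

lemma allO_mmul: "allO g \<Longrightarrow> allO h \<Longrightarrow> allO (mmul g h)"
  by (cases g; cases h) (auto intro!: P_add P_mult[of 0 _ 0, simplified])
lemma allO_ginv: "allO g \<Longrightarrow> allO (ginv g)"
  by (cases g) (simp add: P_cj)

abbreviation K :: "'e mat2 set" where "K \<equiv> Kgrp cj v"
lemma K_iff: "g \<in> K \<longleftrightarrow> G g \<and> allO g"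
  by (simp add: Kgrp_def allO_def)
lemma K_mmul: "g \<in> K \<Longrightarrow> h \<in> K \<Longrightarrow> mmul g h \<in> K"
  by (simp add: K_iff G_mmul allO_mmul)
lemma K_ginv: "g \<in> K \<Longrightarrow> ginv g \<in> K"
  by (simp add: K_iff G_ginv allO_ginv)
lemma K_I: "Imat \<in> K" unfolding K_iff using G_I by (simp add: Imat_def)

definition cong :: "nat \<Rightarrow> 'e mat2 \<Rightarrow> 'e mat2 \<Rightarrow> bool" where
  "cong n g h \<longleftrightarrow> (\<forall>x\<in>entries (msub g h). P n x)"

lemma cong_M2[simp]: "cong n (M2 a b c e) (M2 a' b' c' e') \<longleftrightarrow>
   P n (a - a') \<and> P n (b - b') \<and> P n (c - c') \<and> P n (e - e')"
  by (simp add: cong_def)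

lemma cong_refl: "cong n g g" by (cases g) simp
lemma cong_sym: "cong n g h \<Longrightarrow> cong n h g"
  by (cases g; cases h) (simp, metis P_uminus_iff minus_diff_eq)
lemma cong_trans: "cong n g h \<Longrightarrow> cong n h k \<Longrightarrow> cong n g k"
proof (cases g; cases h; cases k)
  fix a b c d a' b' c' d' a'' b'' c'' d''
  assume "cong n g h" "cong n h k" "g = M2 a b c d" "h = M2 a' b' c' d'" "k = M2 a'' b'' c'' d''"
  then show "cong n g k"
    using P_add[of n "a - a'" "a' - a''"] P_add[of n "b - b'" "b' - b''"]
      P_add[of n "c - c'" "c' - c''"] P_add[of n "d - d'" "d' - d''"] by simp
qed

lemma lin_help: "P n (p - q) \<Longrightarrow> P n (p' - q') \<Longrightarrow> Oi a \<Longrightarrow> Oi b \<Longrightarrow>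
    P n ((p*a + p'*b) - (q*a + q'*b))"
proof -
  assume h: "P n (p - q)" "P n (p' - q')" "Oi a" "Oi b"
  have "(p*a + p'*b) - (q*a + q'*b) = (p - q)*a + (p' - q')*b" by (simp add: algebra_simps)
  then show ?thesis using h by (simp add: P_add P_multO)
qed
lemma lin_help2: "P n (p - q) \<Longrightarrow> P n (p' - q') \<Longrightarrow> Oi a \<Longrightarrow> Oi b \<Longrightarrow>
    P n ((a*p + b*p') - (a*q + b*q'))"
  using lin_help[of n p q p' q' a b] by (simp add: mult.commute)

lemma cong_mmul_right: "cong n X Y \<Longrightarrow> allO A \<Longrightarrow> cong n (mmul X A) (mmul Y A)"
  by (cases X; cases Y; cases A) (simp add: lin_help)
lemma cong_mmul_left: "cong n X Y \<Longrightarrow> allO A \<Longrightarrow> cong n (mmul A X) (mmul A Y)"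
  by (cases X; cases Y; cases A) (simp add: lin_help2)

abbreviation Kd :: "nat \<Rightarrow> 'e mat2 set" where "Kd n \<equiv> Kn cj v n"
lemma Kd_iff: "k \<in> Kd n \<longleftrightarrow> k \<in> K \<and> cong n k Imat"
  by (simp add: Kn_def cong_def)

lemma allO_I: "allO Imat" by (simp add: Imat_def)

lemma Kd_mmul: assumes "k \<in> Kd n" "h \<in> Kd n" shows "mmul k h \<in> Kd n"
proof -
  have "cong n (mmul k h) (mmul k Imat)"
    using assms by (intro cong_mmul_left) (auto simp: Kd_iff K_iff)
  then have "cong n (mmul k h) k" by simp
  then show ?thesis using assms cong_trans K_mmul by (auto simp: Kd_iff)
qed
lemma Kd_ginv: assumes "k \<in> Kd n" shows "ginv k \<in> Kd n"
proof -
  have "cong n (mmul (ginv k) k) (mmul (ginv k) Imat)"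
    using assms by (intro cong_mmul_left) (auto simp: Kd_iff K_iff allO_ginv)
  then have "cong n Imat (ginv k)" using assms ginv_left by (simp add: Kd_iff K_iff)
  then show ?thesis using assms K_ginv cong_sym by (auto simp: Kd_iff)
qed
lemma Kd_I: "Imat \<in> Kd n" by (simp add: Kd_iff K_I cong_refl)
lemma Kd_K: "k \<in> Kd n \<Longrightarrow> k \<in> K" by (simp add: Kd_iff)

lemma Kd_normal: assumes "m \<in> K" "k \<in> Kd n" shows "mmul m (mmul k (ginv m)) \<in> Kd n"
proof -
  have "cong n (mmul m k) (mmul m Imat)"
    using assms by (intro cong_mmul_left) (auto simp: Kd_iff K_iff)
  then have "cong n (mmul (mmul m k) (ginv m)) (mmul m (ginv m))"
    using assms by (intro cong_mmul_right) (auto simp: K_iff allO_ginv)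
  then have "cong n (mmul m (mmul k (ginv m))) Imat"
    using assms ginv_right by (simp add: mmul_assoc K_iff)
  then show ?thesis using assms by (simp add: Kd_iff K_mmul K_ginv Kd_K)
qed
lemma Kd_normal': assumes "m \<in> K" "k \<in> Kd n" shows "mmul (ginv m) (mmul k m) \<in> Kd n"
  using Kd_normal[OF K_ginv[OF assms(1)] assms(2)] by simp

lemma Kd_mono: "m \<le> n \<Longrightarrow> k \<in> Kd n \<Longrightarrow> k \<in> Kd m"
  by (cases k) (auto simp: Kd_iff Imat_def intro: P_mono)

abbreviation B :: "'e mat2 set" where "B \<equiv> Bgrp cj"
lemma B_iff: "b \<in> B \<longleftrightarrow> G b \<and> ent21 b = 0" by (simp add: Bgrp_def)
lemma B_mmul: "b \<in> B \<Longrightarrow> b' \<in> B \<Longrightarrow> mmul b b' \<in> B"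
  by (cases b; cases b') (auto simp: B_iff G_mmul simp del: mmul.simps, auto)
lemma B_ginv: "b \<in> B \<Longrightarrow> ginv b \<in> B"
  by (cases b) (auto simp: B_iff G_ginv simp del: ginv_M2, simp)
lemma B_I: "Imat \<in> B" unfolding B_iff using G_I by (simp add: Imat_def)
lemma ent11_mmul_B: "ent21 b' = 0 \<Longrightarrow> ent11 (mmul b b') = ent11 b * ent11 b'"
  by (cases b; cases b') simp
lemma B_M2: "b \<in> B \<Longrightarrow> \<exists>a x e. b = M2 a x 0 e"
  by (cases b) (auto simp: B_iff)
lemma B_ent: assumes "M2 a x 0 e \<in> B" shows "a \<noteq> 0" "e = inverse (cj a)" "cj x * e + cj e * x = 0"
  using assms by (auto simp: B_iff inG_iff field_simps)
lemma ent11_ginv_B: assumes "b \<in> B" shows "ent11 (ginv b) = inverse (ent11 b)"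
proof -
  obtain a x e where b: "b = M2 a x 0 e" using B_M2 assms by blast
  show ?thesis using B_ent[of a x e] assms b by (simp add: cj_inverse)
qed
lemma ent11_B_nz: "b \<in> B \<Longrightarrow> ent11 b \<noteq> 0"
  using B_M2 B_ent(1) by fastforce

lemma BK_unit: assumes "b \<in> B" "b \<in> K" shows "unit (ent11 b)"
proof -
  obtain a x e where b: "b = M2 a x 0 e" using B_M2 assms by blast
  have "e = inverse (cj a)" "a \<noteq> 0" using B_ent assms b by auto
  moreover have "Oi a" "Oi e" using assms b by (auto simp: K_iff)
  ultimately show ?thesis unfolding b
    by (auto simp: unit_def inP_def v_inverse v_cj)
qed

lemma same_row_B:
  assumes "G g1" "G g2" "ent21 g1 * ent22 g2 = ent22 g1 * ent21 g2"
  shows "mmul g1 (ginv g2) \<in> B"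
proof -
  obtain a1 b1 c1 e1 where g1: "g1 = M2 a1 b1 c1 e1" by (cases g1)
  obtain a2 b2 c2 e2 where g2: "g2 = M2 a2 b2 c2 e2" by (cases g2)
  have iso: "c2 * cj e2 + e2 * cj c2 = 0" using G_bottom_iso assms g2 by blast
  have eq: "c1 * e2 = e1 * c2" using assms g1 g2 by simp
  have "c1 * cj e2 + e1 * cj c2 = 0"
  proof (cases "e2 = 0")
    case True
    then have "c2 \<noteq> 0" using assms(2) g2 by (auto simp: inG_iff)
    then have "e1 = 0" using eq True by simp
    then show ?thesis using True by simp
  next
    case False
    have "c1 = e1 * c2 / e2" using eq False by (simp add: field_simps)
    then have "c1 * cj e2 + e1 * cj c2 = e1 * (c2 * cj e2 + e2 * cj c2) / e2"
      using False by (simp add: field_simps)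
    then show ?thesis using iso by simp
  qed
  moreover have "G (mmul g1 (ginv g2))" using assms G_mmul G_ginv by blast
  ultimately show ?thesis using g1 g2 by (simp add: B_iff)
qed

end

lemma fiber_count:
  assumes fin: "finite A" and two: "\<And>a. a \<in> A \<Longrightarrow> card {a'\<in>A. f a' = f a} \<le> 2"
    and a0: "a0 \<in> A" "{a'\<in>A. f a' = f a0} = {a0}"
  shows "card A + 1 \<le> 2 * card (f ` A)"
proof -
  define fib where "fib c = {a'\<in>A. f a' = c}" for c
  have "A = (\<Union>c\<in>f ` A. fib c)" by (auto simp: fib_def)
  then have "card A \<le> (\<Sum>c\<in>f ` A. card (fib c))"
    using card_UN_le[of "f ` A" fib] fin by simp
  also have "\<dots> = card (fib (f a0)) + (\<Sum>c\<in>f ` A - {f a0}. card (fib c))"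
    using fin a0 by (subst sum.remove[of _ "f a0"]) auto
  also have "\<dots> \<le> 1 + (\<Sum>c\<in>f ` A - {f a0}. 2)"
  proof (intro add_mono sum_mono)
    show "card (fib (f a0)) \<le> 1" using a0 by (simp add: fib_def)
    fix c assume "c \<in> f ` A - {f a0}"
    then obtain a where "a \<in> A" "c = f a" by auto
    then show "card (fib c) \<le> 2" using two by (simp add: fib_def)
  qed
  also have "\<dots> = 1 + 2 * (card (f ` A) - 1)"
    using fin a0 by (simp add: card_Diff_singleton)
  finally have le: "card A \<le> 1 + 2 * (card (f ` A) - 1)" .
  have "card (f ` A) \<ge> 1" using a0 fin by (metis One_nat_def Suc_leI card_gt_0_iff empty_iff finite_imageI image_eqI)
  then show ?thesis using le by linarith
qed

context vs begin

lemma P1_prime: assumes "P 1 (a * b)" "Oi a" "Oi b" shows "P 1 a \<or> P 1 b"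
  using assms unfolding inP_def by (cases "a = 0"; cases "b = 0") (auto simp: v_mult)

lemma reps_E: "\<exists>R. finite R \<and> (\<forall>x. Oi x \<longrightarrow> (\<exists>r\<in>R. P n (x - r)))"
proof (induction n)
  case 0
  show ?case by (rule exI[of _ "{0}"]) simp
next
  case (Suc n)
  then obtain S where S: "finite S" "\<forall>x. Oi x \<longrightarrow> (\<exists>r\<in>S. P n (x - r))" by blast
  obtain R where R: "finite R" "\<forall>x. Oi x \<longrightarrow> (\<exists>r\<in>R. P 1 (x - r))" using resfin by blast
  let ?T = "(\<lambda>(r, t). r + pi * t) ` (R \<times> S)"
  have "\<exists>q\<in>?T. P (Suc n) (x - q)" if x: "Oi x" for x
  proof -
    obtain r where r: "r \<in> R" "P 1 (x - r)" using R x by blast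
    define y where "y = (x - r) / pi"
    have y: "Oi y" using P_pi_factor[OF r(2)] by (simp add: y_def)
    obtain t where t: "t \<in> S" "P n (y - t)" using S y by blast
    have "x - (r + pi * t) = pi * (y - t)" using pi by (simp add: y_def field_simps)
    moreover have "P (Suc n) (pi * (y - t))"
      using P_mult[OF _ t(2), of 1 pi] pi by (simp add: inP_def)
    ultimately show ?thesis using r t by force
  qed
  moreover have "finite ?T" using R S by simp
  ultimately show ?case by blast
qed

lemma reps_F: "\<exists>R. finite R \<and> (\<forall>r\<in>R. cj r = r \<and> Oi r) \<and>
   (\<forall>x. Oi x \<and> cj x = x \<longrightarrow> (\<exists>r\<in>R. P n (x - r)))"
proof -
  obtain R where R: "finite R" "\<forall>x. Oi x \<longrightarrow> (\<exists>r\<in>R. P n (x - r))" using reps_E by blast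
  define R' where "R' = (\<lambda>r. (r + cj r) / 2) ` {r\<in>R. \<exists>x. Oi x \<and> P n (x - r)}"
  have fin: "finite R'" using R by (simp add: R'_def)
  have "cj ((r + cj r) / 2) = (r + cj r) / 2" for r
    by (simp add: cj_simps cj_numeral2 add.commute)
  moreover have "Oi ((r + cj r) / 2)" if "Oi x" "P n (x - r)" for x r
  proof -
    have "Oi r" using that P_O[OF that(2)] P_diff[of 0 x "x - r"] by simp
    then show ?thesis using P_div_unit[of 0 "r + cj r" 2] unit_s P_add[of 0 r "cj r"] P_cj by simp
  qed
  moreover have "\<exists>q\<in>R'. P n (x - q)" if xx: "Oi x" "cj x = x" for x
  proof -
    obtain r where r: "r \<in> R" "P n (x - r)" using R xx by blast
    have "P n (cj (x - r))" using r P_cj by simp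
    then have c: "P n (x - cj r)" using xx by (simp add: cj_diff)
    have eq: "x - (r + cj r) / 2 = ((x - r) + (x - cj r)) / 2" using two_nz by (simp add: field_simps)
    have pp: "P n (((x - r) + (x - cj r)) / 2)"
      using P_div_unit[OF P_add[OF r(2) c]] unit_s by simp
    have mem: "(r + cj r) / 2 \<in> R'" using r xx unfolding R'_def by blast
    have "P n (x - (r + cj r) / 2)" unfolding eq by (rule pp)
    then show ?thesis using mem by blast
  qed
  moreover have "\<forall>r\<in>R'. cj r = r \<and> Oi r" unfolding R'_def using calculation(1,2) by blast
  ultimately show ?thesis using fin by (intro exI[of _ R']) blast
qed

definition RF :: "'e set" where
  "RF = (SOME R. finite R \<and> (\<forall>r\<in>R. cj r = r \<and> Oi r) \<and> (\<forall>x. Oi x \<and> cj x = x \<longrightarrow> (\<exists>r\<in>R. P 1 (x - r))))"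
lemma RF: "finite RF" "\<And>r. r \<in> RF \<Longrightarrow> cj r = r \<and> Oi r"
  "\<And>x. Oi x \<Longrightarrow> cj x = x \<Longrightarrow> \<exists>r\<in>RF. P 1 (x - r)"
  using someI_ex[OF reps_F[of 1]] unfolding RF_def by blast+

definition rho :: "'e \<Rightarrow> 'e" where "rho x = (SOME r. r \<in> RF \<and> P 1 (x - r))"

lemma rho: assumes "Oi x" "cj x = x" shows "rho x \<in> RF" "P 1 (x - rho x)"
proof -
  have "\<exists>r. r \<in> RF \<and> P 1 (x - r)" using RF(3)[OF assms] by blast
  from someI_ex[OF this] show "rho x \<in> RF" "P 1 (x - rho x)" unfolding rho_def by blast+
qed

lemma P1_trans: "P 1 (x - y) \<Longrightarrow> P 1 (y - z) \<Longrightarrow> P 1 (x - z)"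
  using P_add[of 1 "x - y" "y - z"] by simp
lemma P1_sym: "P 1 (x - y) \<Longrightarrow> P 1 (y - x)"
  using P_uminus[of 1 "x - y"] by simp

lemma rho_eq: assumes "Oi x" "cj x = x" "Oi y" "cj y = y" "P 1 (x - y)" shows "rho x = rho y"
proof -
  have "\<And>r. (r \<in> RF \<and> P 1 (x - r)) = (r \<in> RF \<and> P 1 (y - r))"
    using assms P1_trans P1_sym by blast
  then show ?thesis unfolding rho_def by simp
qed
lemma rho_eq_iff: assumes "Oi x" "cj x = x" "Oi y" "cj y = y" shows "rho x = rho y \<longleftrightarrow> P 1 (x - y)"
proof
  assume "rho x = rho y"
  then show "P 1 (x - y)" using rho(2)[OF assms(1,2)] rho(2)[OF assms(3,4)] P1_trans P1_sym by metis
qed (use rho_eq assms in blast)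

definition QF :: "'e set" where "QF = rho ` {x. Oi x \<and> cj x = x}"
lemma QF_fin: "finite QF"
proof -
  have "QF \<subseteq> RF" unfolding QF_def using rho(1) by auto
  then show ?thesis using RF(1) finite_subset by blast
qed
lemma QF_elem: "q \<in> QF \<Longrightarrow> Oi q \<and> cj q = q" unfolding QF_def using rho(1) RF(2) by auto
lemma rho_QF: "Oi x \<Longrightarrow> cj x = x \<Longrightarrow> rho x \<in> QF" unfolding QF_def by auto
lemma rho_idem: assumes "q \<in> QF" shows "rho q = q"
proof -
  obtain x where x: "Oi x" "cj x = x" "q = rho x" using assms unfolding QF_def by auto
  have "P 1 (q - x)" using rho(2)[OF x(1,2)] x(3) P1_sym by simp
  then show ?thesis using rho_eq[of q x] x QF_elem[OF assms] by simp
qed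

lemma sq_fiber:
  assumes c: "unit c" "cj c = c" and w: "Oi w" "cj w = w"
  defines "f \<equiv> \<lambda>q. rho (w + c * q * q)"
  shows "\<And>q. q \<in> QF \<Longrightarrow> card {q'\<in>QF. f q' = f q} \<le> 2"
    and "{q'\<in>QF. f q' = f (rho 0)} = {rho 0}"
proof -
  have fO: "Oi (w + c * q * q) \<and> cj (w + c * q * q) = w + c * q * q" if "q \<in> QF" for q
    using QF_elem[OF that] w c unit_O[OF c(1)]
    by (auto simp: cj_simps intro!: P_add P_Omult P_multO)
  have key: "f q' = f q \<longleftrightarrow> (rho q' = rho q \<or> rho q' = rho (- q))" if "q \<in> QF" "q' \<in> QF" for q q'
  proof -
    have q: "Oi q" "cj q = q" "Oi q'" "cj q' = q'" using QF_elem that by auto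
    have "f q' = f q \<longleftrightarrow> P 1 ((w + c * q' * q') - (w + c * q * q))"
      unfolding f_def using rho_eq_iff fO that by blast
    also have "\<dots> \<longleftrightarrow> P 1 (c * ((q' - q) * (q' - (- q))))" by (simp add: algebra_simps)
    also have "\<dots> \<longleftrightarrow> P 1 ((q' - q) * (q' - (- q)))"
    proof
      assume "P 1 (c * ((q' - q) * (q' - (- q))))"
      then show "P 1 ((q' - q) * (q' - (- q)))"
        using P_Omult[of "inverse c"] unit_inverse[OF c(1)] unit_O c(1) unit_nz
        by (metis (no_types, lifting) mult.assoc left_inverse mult_1)
    qed (use c unit_O P_Omult in blast)
    also have "\<dots> \<longleftrightarrow> P 1 (q' - q) \<or> P 1 (q' - (- q))"
    proof -
      have o: "Oi (q' - q)" "Oi (q' - (- q))" using q P_add[of 0 q' q] P_diff[of 0 q' q] by auto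
      show ?thesis using P1_prime[OF _ o] P_multO[OF _ o(2)] P_Omult[OF o(1)] by blast
    qed
    also have "\<dots> \<longleftrightarrow> rho q' = rho q \<or> rho q' = rho (- q)"
      using rho_eq_iff q by (simp add: cj_uminus)
    finally show ?thesis .
  qed
  show "card {q'\<in>QF. f q' = f q} \<le> 2" if "q \<in> QF" for q
  proof -
    have sub: "{q'\<in>QF. f q' = f q} \<subseteq> {q, rho (- q)}"
    proof
      fix q' assume "q' \<in> {q'\<in>QF. f q' = f q}"
      then have "q' \<in> QF" "rho q' = rho q \<or> rho q' = rho (- q)" using key that by auto
      then show "q' \<in> {q, rho (- q)}" using rho_idem that by auto
    qed
    have c2: "card {q, rho (- q)} \<le> 2" by (cases "q = rho (- q)") auto
    have "card {q'\<in>QF. f q' = f q} \<le> card {q, rho (- q)}"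
      by (rule card_mono[OF _ sub]) simp
    then show ?thesis using c2 by linarith
  qed
  have r0: "rho 0 \<in> QF" using rho_QF by simp
  have "q' = rho 0" if "q' \<in> QF" "f q' = f (rho 0)" for q'
  proof -
    have "rho q' = rho (rho 0) \<or> rho q' = rho (- rho 0)" using key r0 that by blast
    moreover have "rho (- rho 0) = rho 0"
    proof -
      have "P 1 (0 - rho 0)" using rho(2)[of 0] by simp
      then have "P 1 (- rho 0 - 0)" by simp
      then show ?thesis using rho_eq[of "- rho 0" 0] QF_elem[OF r0] by (simp add: cj_uminus)
    qed
    ultimately show ?thesis using rho_idem that r0 by auto
  qed
  then show "{q'\<in>QF. f q' = f (rho 0)} = {rho 0}" using r0 by auto
qed

lemma norm_mod_p: assumes w: "unit w" "cj w = w"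
  shows "\<exists>a. unit a \<and> P 1 (a * cj a - w)"
proof -
  define f1 where "f1 = (\<lambda>q. rho (0 + 1 * q * q))"
  define f2 where "f2 = (\<lambda>q. rho (w + eps * q * q))"
  have c1: "card QF + 1 \<le> 2 * card (f1 ` QF)"
    using sq_fiber[of 1 0] QF_fin rho_QF[of 0] unfolding f1_def
    by (intro fiber_count) auto
  have c2: "card QF + 1 \<le> 2 * card (f2 ` QF)"
    using sq_fiber[of eps w] QF_fin rho_QF[of 0] unit_s w unit_O cj_eps unfolding f2_def
    by (intro fiber_count) auto
  have sub1: "f1 ` QF \<subseteq> QF" and sub2: "f2 ` QF \<subseteq> QF" unfolding f1_def f2_def
    using QF_elem w unit_O unit_s by (auto intro!: rho_QF P_add P_mult[of 0 _ 0, simplified] simp: cj_simps)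
  have "card (f1 ` QF \<union> f2 ` QF) \<le> card QF"
    using sub1 sub2 QF_fin by (intro card_mono) auto
  moreover have "card (f1 ` QF) + card (f2 ` QF) = card (f1 ` QF \<union> f2 ` QF) + card (f1 ` QF \<inter> f2 ` QF)"
    using QF_fin by (intro card_Un_Int) auto
  ultimately have "card (f1 ` QF \<inter> f2 ` QF) > 0" using c1 c2 by linarith
  then obtain z where "z \<in> f1 ` QF \<inter> f2 ` QF" by (metis card.empty ex_in_conv less_irrefl)
  then obtain x y where xy: "x \<in> QF" "y \<in> QF" "f1 x = f2 y" by auto
  have x: "Oi x" "cj x = x" and y: "Oi y" "cj y = y" using QF_elem xy by auto
  have O1: "Oi (x * x)" "cj (x * x) = x * x" using x by (auto simp: cj_mult intro: P_mult[of 0 _ 0, simplified])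
  have O2: "Oi (w + eps * y * y)" "cj (w + eps * y * y) = w + eps * y * y"
    using y w unit_O O_s by (auto simp: cj_simps intro!: P_add P_mult[of 0 _ 0, simplified])
  have "P 1 (x * x - (w + eps * y * y))"
    using xy(3) rho_eq_iff[OF O1 O2] unfolding f1_def f2_def by simp
  moreover define a where "a = x + s * y"
  have "a * cj a = x * x - eps * y * y"
    unfolding a_def using x y by (simp add: cj_simps algebra_simps ss[symmetric])
  ultimately have n: "P 1 (a * cj a - w)"
  proof -
    assume h1: "P 1 (x * x - (w + eps * y * y))" and h2: "a * cj a = x * x - eps * y * y"
    have e: "a * cj a - w = x * x - (w + eps * y * y)" using h2 by (simp add: algebra_simps)
    show ?thesis unfolding e by (rule h1)
  qed
  have aO: "Oi a" unfolding a_def using x y O_s by (auto intro!: P_add P_mult[of 0 _ 0, simplified])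
  have "unit (a * cj a)" using unit_perturb'[OF w(1)] n by blast
  then have "unit a" using O_unit_factor aO P_cj by blast
  then show ?thesis using n by blast
qed

lemma norm_approx: assumes w: "unit w" "cj w = w"
  shows "\<exists>a. unit a \<and> P (Suc m) (a * cj a - w)"
proof (induction m)
  case 0
  then show ?case using norm_mod_p[OF w] by simp
next
  case (Suc m)
  then obtain a where a: "unit a" "P (Suc m) (a * cj a - w)" by blast
  have wnz: "w \<noteq> 0" using w unit_nz by blast
  define h where "h = (a * cj a - w) / (2 * w)"
  have d: "P (Suc m) h" unfolding h_def using P_div_unit[OF a(2) unit_mult[OF unit_s(3) w(1)]] .
  have cd: "cj h = h" unfolding h_def using w by (simp add: cj_simps cj_numeral2 mult.commute)
  define a' where "a' = a * (1 - h)"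
  have u: "unit (1 - h)"
    using unit_perturb[of 1 "- h"] d P_mono[of 1 "Suc m"] by simp
  have ca: "cj (1 - h) = 1 - h" using cd by (simp add: cj_simps)
  have N: "a * cj a = w * (1 + 2 * h)" unfolding h_def using wnz two_nz by (simp add: field_simps)
  have "a' * cj a' = (a * cj a) * ((1 - h) * (1 - h))"
    unfolding a'_def by (simp only: cj_mult ca) (simp add: algebra_simps)
  then have "a' * cj a' - w = w * (h * h) * (2 * h - 3)" unfolding N by (simp add: algebra_simps)
  moreover have "P (Suc (Suc m)) (w * (h * h) * (2 * h - 3))"
  proof -
    have "P (Suc m + Suc m) (h * h)" using P_mult[OF d d] .
    then have "P (Suc (Suc m)) (h * h)" using P_mono by (metis add_Suc add_Suc_right le_add1 Suc_le_mono)
    moreover have "Oi (2 * h - 3)"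
    proof -
      have "Oi (3::'e)" using P_add[OF O_2 O_1] by simp
      then show ?thesis using P_diff P_Omult[OF O_2 P_O[OF d]] by blast
    qed
    ultimately show ?thesis using unit_O[OF w(1)] by (metis P_Omult P_multO mult.assoc)
  qed
  ultimately show ?case using unit_mult[OF a(1) u] unfolding a'_def by metis
qed

end

context vs begin

lemma ginv_I[simp]: "ginv Imat = Imat" by (simp add: Imat_def)
lemma G_cancel_left[simp]: "G a \<Longrightarrow> mmul (ginv a) (mmul a g) = g"
  by (simp add: mmul_assoc[symmetric] ginv_left)
lemma G_cancel_left'[simp]: "G a \<Longrightarrow> mmul a (mmul (ginv a) g) = g"
  by (simp add: mmul_assoc[symmetric] ginv_right)
lemma G_cancel_right[simp]: "G a \<Longrightarrow> mmul (mmul g a) (ginv a) = g"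
  by (simp add: mmul_assoc ginv_right)
lemma G_cancel_right'[simp]: "G a \<Longrightarrow> mmul (mmul g (ginv a)) a = g"
  by (simp add: mmul_assoc ginv_left)

lemma G_of_mmul: "G (mmul g k) \<Longrightarrow> G k \<Longrightarrow> G g"
  using G_mmul[of "mmul g k" "ginv k"] G_ginv[of k] by simp
lemma G_of_mmul': "G (mmul b g) \<Longrightarrow> G b \<Longrightarrow> G g"
  using G_mmul[of "ginv b" "mmul b g"] G_ginv[of b] by simp

lemma K_G: "k \<in> K \<Longrightarrow> G k" by (simp add: K_iff)
lemma B_G: "b \<in> B \<Longrightarrow> G b" by (simp add: B_iff)

lemma iwasawa: assumes "G g" shows "\<exists>b k. b \<in> B \<and> k \<in> K \<and> g = mmul b k"
proof -
  obtain a x c e where g: "g = M2 a x c e" by (cases g)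
  have iso: "c * cj e + e * cj c = 0" using G_bottom_iso assms g by blast
  have det: "a * e - x * c \<noteq> 0" using assms g by (simp add: inG_iff)
  show ?thesis
  proof (cases "c = 0")
    case True
    then have "g \<in> B" using assms g by (simp add: B_iff)
    then show ?thesis using K_I by (intro exI[of _ g] exI[of _ Imat]) simp
  next
    case cnz: False
    show ?thesis
    proof (cases "e \<noteq> 0 \<and> Oi (c / e)")
      case True
      define k where "k = nm (c / e)"
      have "c / e + cj (c / e) = (c * cj e + e * cj c) / (e * cj e)"
        using True by (simp add: cj_divide field_simps)
      then have "G k" unfolding k_def G_nm using iso by simp
      then have kK: "k \<in> K" using True by (simp add: K_iff k_def nm_def)
      have "mmul g (ginv k) \<in> B"
        using same_row_B[OF assms \<open>G k\<close>] True g by (simp add: k_def nm_def)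
      then show ?thesis using kK \<open>G k\<close> by (intro exI[of _ "mmul g (ginv k)"] exI[of _ k]) simp
    next
      case False
      define z where "z = e / c"
      have zO: "Oi z"
      proof (cases "e = 0")
        case True then show ?thesis by (simp add: z_def)
      next
        case enz: False
        then have "\<not> Oi (c / e)" using False by blast
        then have "v (c / e) < 0" by (simp add: inP_def)
        then have "v (c / e) < 0" .
        moreover have "v z = - v (c / e)" unfolding z_def using cnz enz
          by (simp add: v_divide)
        ultimately show ?thesis by (simp add: inP_def)
      qed
      define k where "k = M2 0 1 1 z"
      have "z + cj z = (e * cj c + c * cj e) / (c * cj c)"
        unfolding z_def using cnz by (simp add: cj_divide field_simps)
      then have zz: "z + cj z = 0" using iso by (simp add: add.commute)
      have "G k" unfolding k_def inG_iff using zz by (simp add: add.commute)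
      then have kK: "k \<in> K" using zO by (simp add: K_iff k_def)
      have "mmul g (ginv k) \<in> B"
        using same_row_B[OF assms \<open>G k\<close>] g cnz by (simp add: k_def z_def)
      then show ?thesis using kK \<open>G k\<close> by (intro exI[of _ "mmul g (ginv k)"] exI[of _ k]) simp
    qed
  qed
qed

definition iw :: "'e mat2 \<Rightarrow> 'e mat2 \<times> 'e mat2" where
  "iw g = (SOME p. fst p \<in> B \<and> snd p \<in> K \<and> g = mmul (fst p) (snd p))"
definition bp where "bp g = fst (iw g)"
definition kp where "kp g = snd (iw g)"
lemma iw: assumes "G g" shows "bp g \<in> B" "kp g \<in> K" "g = mmul (bp g) (kp g)"
proof -
  have "\<exists>p. fst p \<in> B \<and> snd p \<in> K \<and> g = mmul (fst p) (snd p)"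
    using iwasawa[OF assms] by auto
  from someI_ex[OF this] show "bp g \<in> B" "kp g \<in> K" "g = mmul (bp g) (kp g)"
    unfolding bp_def kp_def iw_def by auto
qed

lemma decomp_change:
  assumes "b1 \<in> B" "b2 \<in> B" "k1 \<in> K" "k2 \<in> K" "mmul b1 k1 = mmul b2 k2"
  shows "mmul k1 (ginv k2) \<in> B" "mmul k1 (ginv k2) \<in> K"
    "k1 = mmul (mmul k1 (ginv k2)) k2" "b2 = mmul b1 (mmul k1 (ginv k2))"
proof -
  have G: "G b1" "G b2" "G k1" "G k2" using assms by (auto simp: B_iff K_iff)
  have "mmul k1 (ginv k2) = mmul (ginv b1) b2"
  proof -
    have "mmul (ginv b1) (mmul (mmul b1 k1) (ginv k2)) = mmul (ginv b1) (mmul (mmul b2 k2) (ginv k2))"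
      using assms(5) by simp
    then show ?thesis using G by (simp add: mmul_assoc ginv_right)
  qed
  then show "mmul k1 (ginv k2) \<in> B" using assms B_mmul B_ginv by simp
  show "mmul k1 (ginv k2) \<in> K" using assms K_mmul K_ginv by simp
  show "k1 = mmul (mmul k1 (ginv k2)) k2" using G by simp
  show "b2 = mmul b1 (mmul k1 (ginv k2))" using \<open>mmul k1 (ginv k2) = mmul (ginv b1) b2\<close> G by simp
qed

end

locale U11 = vs cj v eps s for cj :: "'e::field \<Rightarrow> 'e" and v eps s +
  fixes chi :: "'e \<Rightarrow> complex" and d :: nat
  assumes char: "is_char chi" and dpos: "1 \<le> d"
    and trivd: "\<And>a. a \<noteq> 0 \<Longrightarrow> inP v d (a - 1) \<Longrightarrow> chi a = 1"
begin

lemma chi_mult: "a \<noteq> 0 \<Longrightarrow> b \<noteq> 0 \<Longrightarrow> chi (a * b) = chi a * chi b"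
  using char by (simp add: is_char_def)
lemma chi_nz: "a \<noteq> 0 \<Longrightarrow> chi a \<noteq> 0"
  using char by (simp add: is_char_def)
lemma chi_1[simp]: "chi 1 = 1"
  using chi_mult[of 1 1] chi_nz[of 1] by simp
lemma chi_inverse: "a \<noteq> 0 \<Longrightarrow> chi (inverse a) = inverse (chi a)"
  using chi_mult[of a "inverse a"] chi_nz[of a] by (simp add: field_simps)

definition cB :: "'e mat2 \<Rightarrow> complex" where "cB b = chi (ent11 b)"

lemma cB_mult: "b \<in> B \<Longrightarrow> b' \<in> B \<Longrightarrow> cB (mmul b b') = cB b * cB b'"
  unfolding cB_def by (simp add: ent11_mmul_B B_iff chi_mult ent11_B_nz)
lemma cB_nz: "b \<in> B \<Longrightarrow> cB b \<noteq> 0"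
  unfolding cB_def by (simp add: chi_nz ent11_B_nz)
lemma cB_ginv: "b \<in> B \<Longrightarrow> cB (ginv b) = inverse (cB b)"
  unfolding cB_def by (simp add: ent11_ginv_B chi_inverse ent11_B_nz)
lemma cB_I[simp]: "cB Imat = 1" by (simp add: cB_def Imat_def)
lemma cB_NB: assumes "n \<in> B" "n \<in> Kd d" shows "cB n = 1"
proof -
  obtain a x e where n: "n = M2 a x 0 e" using B_M2 assms by blast
  have "P d (a - 1)" using assms n by (simp add: Kd_iff Imat_def)
  moreover have "a \<noteq> 0" using ent11_B_nz assms n by fastforce
  ultimately show ?thesis unfolding cB_def n using trivd by simp
qed

abbreviation W where "W \<equiv> Vfix cj v chi d"

lemma W_iff: "f \<in> W \<longleftrightarrow> (\<forall>g. \<not> G g \<longrightarrow> f g = 0) \<and>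
   (\<forall>b\<in>B. \<forall>g. G g \<longrightarrow> f (mmul b g) = cB b * f g) \<and> (\<forall>k\<in>Kd d. \<forall>g. f (mmul g k) = f g)"
  unfolding Vfix_def Vchi_def rtrans_def cB_def fun_eq_iff by blast

lemma W_out: "f \<in> W \<Longrightarrow> \<not> G g \<Longrightarrow> f g = 0" by (simp add: W_iff)
lemma W_left: "f \<in> W \<Longrightarrow> b \<in> B \<Longrightarrow> G g \<Longrightarrow> f (mmul b g) = cB b * f g" by (simp add: W_iff)
lemma W_right: "f \<in> W \<Longrightarrow> k \<in> Kd d \<Longrightarrow> f (mmul g k) = f g" by (simp add: W_iff)

lemma rtrans_rtrans: "rtrans a (rtrans b f) = rtrans (mmul a b) f"
  by (simp add: rtrans_def mmul_assoc)
lemma rtrans_apply: "rtrans k f g = f (mmul g k)" by (simp add: rtrans_def)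
lemma rtrans_I[simp]: "rtrans Imat f = f" by (simp add: rtrans_def)

lemma W_rtrans: assumes f: "f \<in> W" and k: "k \<in> K" shows "rtrans k f \<in> W"
proof -
  have Gk: "G k" using k by (simp add: K_iff)
  have "rtrans k f g = 0" if "\<not> G g" for g
  proof -
    have "\<not> G (mmul g k)" using that G_of_mmul Gk by blast
    then show ?thesis using f W_out by (simp add: rtrans_apply)
  qed
  moreover have "rtrans k f (mmul b g) = cB b * rtrans k f g" if "b \<in> B" "G g" for b g
    using W_left[OF f that(1) G_mmul[OF that(2) Gk]] by (simp add: rtrans_apply mmul_assoc)
  moreover have "rtrans k f (mmul g k') = rtrans k f g" if "k' \<in> Kd d" for k' g
  proof -
    have m: "mmul (ginv k) (mmul k' k) \<in> Kd d" using Kd_normal'[OF k that] .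
    have "mmul (mmul g k') k = mmul (mmul g k) (mmul (ginv k) (mmul k' k))"
      using Gk by (simp add: mmul_assoc)
    then show ?thesis using W_right[OF f m] by (simp add: rtrans_apply)
  qed
  ultimately show ?thesis by (simp add: W_iff)
qed

lemma W_zero: "(0 :: 'e mat2 \<Rightarrow> complex) \<in> W" by (simp add: W_iff)
lemma W_add: "f \<in> W \<Longrightarrow> h \<in> W \<Longrightarrow> f + h \<in> W" by (simp add: W_iff algebra_simps)
lemma W_scale: "f \<in> W \<Longrightarrow> (\<lambda>g. c * f g) \<in> W" by (simp add: W_iff)
lemma W_sum: "finite A \<Longrightarrow> (\<And>a. a \<in> A \<Longrightarrow> F a \<in> W) \<Longrightarrow> sum F A \<in> W"
  by (induction A rule: finite_induct) (auto intro: W_zero W_add)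

abbreviation Hom where "Hom \<equiv> HomK cj v W"

lemma Hom_iff: "\<phi> \<in> Hom \<longleftrightarrow> (\<forall>f\<in>W. \<phi> f \<in> W) \<and> (\<forall>f. f \<notin> W \<longrightarrow> \<phi> f = 0) \<and>
     (\<forall>f\<in>W. \<forall>h\<in>W. \<phi> (f + h) = \<phi> f + \<phi> h) \<and>
     (\<forall>c. \<forall>f\<in>W. \<phi> (\<lambda>g. c * f g) = (\<lambda>g. c * \<phi> f g)) \<and>
     (\<forall>k\<in>K. \<forall>f\<in>W. \<phi> (rtrans k f) = rtrans k (\<phi> f))"
  by (simp add: HomK_def)

lemma Hom_zero: assumes "\<phi> \<in> Hom" shows "\<phi> 0 = 0"
proof -
  have "\<phi> (\<lambda>g. 0 * (0::'e mat2 \<Rightarrow> complex) g) = (\<lambda>g. 0 * \<phi> 0 g)"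
    using assms W_zero by (simp only: Hom_iff)
  moreover have "(\<lambda>g. 0 * (0::'e mat2 \<Rightarrow> complex) g) = 0" by (simp add: fun_eq_iff)
  moreover have "(\<lambda>g. 0 * \<phi> 0 g) = 0" by (simp add: fun_eq_iff)
  ultimately show ?thesis by metis
qed

lemma Hom_sum: assumes "\<phi> \<in> Hom" "finite A" "\<And>a. a \<in> A \<Longrightarrow> F a \<in> W"
  shows "\<phi> (sum F A) = (\<Sum>a\<in>A. \<phi> (F a))"
  using assms(2,3)
proof (induction A rule: finite_induct)
  case empty then show ?case using Hom_zero[OF assms(1)] by (simp only: sum.empty)
next
  case (insert x A)
  have s: "sum F A \<in> W" using W_sum insert by auto
  have "\<phi> (sum F (insert x A)) = \<phi> (F x + sum F A)" by (simp only: sum.insert[OF insert(1,2)])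
  also have "\<dots> = \<phi> (F x) + \<phi> (sum F A)" using assms(1) s insert(4) unfolding Hom_iff by blast
  moreover have ih: "\<phi> (sum F A) = (\<Sum>a\<in>A. \<phi> (F a))" using insert by auto
  ultimately show ?case by (simp only: sum.insert[OF insert(1,2)])
qed

definition lamH :: "(('e mat2 \<Rightarrow> complex) \<Rightarrow> ('e mat2 \<Rightarrow> complex)) \<Rightarrow> ('e mat2 \<Rightarrow> complex) \<Rightarrow> complex"
  where "lamH \<phi> f = \<phi> f Imat"

definition eqv :: "(('e mat2 \<Rightarrow> complex) \<Rightarrow> complex) \<Rightarrow> bool" where
  "eqv l \<longleftrightarrow> (\<forall>f\<in>W. \<forall>h\<in>W. l (f + h) = l f + l h) \<and> (\<forall>c. \<forall>f\<in>W. l (\<lambda>g. c * f g) = c * l f) \<and>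
     (\<forall>\<beta>\<in>B \<inter> K. \<forall>f\<in>W. l (rtrans \<beta> f) = cB \<beta> * l f)"

lemma eqv_sum: assumes "eqv l" "finite A" "\<And>a. a \<in> A \<Longrightarrow> F a \<in> W"
  shows "l (sum F A) = (\<Sum>a\<in>A. l (F a))"
  using assms(2,3)
proof (induction A rule: finite_induct)
  case empty
  have "l (\<lambda>g. 0 * (0::'e mat2 \<Rightarrow> complex) g) = 0 * l 0" using assms(1) W_zero by (simp only: eqv_def)
  moreover have "(\<lambda>g. 0 * (0::'e mat2 \<Rightarrow> complex) g) = 0" by (simp add: fun_eq_iff)
  ultimately show ?case by simp
next
  case (insert x A)
  have s: "sum F A \<in> W" using W_sum insert by auto
  have "l (sum F (insert x A)) = l (F x + sum F A)" by (simp only: sum.insert[OF insert(1,2)])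
  also have "\<dots> = l (F x) + l (sum F A)" using assms(1) s insert(4) unfolding eqv_def by blast
  moreover have ih: "l (sum F A) = (\<Sum>a\<in>A. l (F a))" using insert by auto
  ultimately show ?case by (simp only: sum.insert[OF insert(1,2)])
qed

lemma Hom_formula: assumes "\<phi> \<in> Hom" "f \<in> W" "G g"
  shows "\<phi> f g = cB (bp g) * lamH \<phi> (rtrans (kp g) f)"
proof -
  have "\<phi> f g = \<phi> f (mmul (bp g) (kp g))" using iw[OF assms(3)] by simp
  also have "\<dots> = cB (bp g) * \<phi> f (kp g)"
    using W_left[of "\<phi> f" "bp g" "kp g"] assms iw[OF assms(3)] K_G by (simp add: Hom_iff)
  also have "\<phi> f (kp g) = rtrans (kp g) (\<phi> f) Imat" by (simp add: rtrans_apply)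
  also have "\<dots> = \<phi> (rtrans (kp g) f) Imat" using assms iw[OF assms(3)] by (simp add: Hom_iff)
  finally show ?thesis by (simp add: lamH_def)
qed

lemma lamH_eqv: assumes "\<phi> \<in> Hom" shows "eqv (lamH \<phi>)"
proof -
  have "lamH \<phi> (rtrans \<beta> f) = cB \<beta> * lamH \<phi> f" if "\<beta> \<in> B \<inter> K" "f \<in> W" for \<beta> f
  proof -
    have "lamH \<phi> (rtrans \<beta> f) = rtrans \<beta> (\<phi> f) Imat"
      using assms that by (simp add: Hom_iff lamH_def)
    also have "\<dots> = \<phi> f (mmul \<beta> Imat)" by (simp add: rtrans_apply)
    also have "\<dots> = cB \<beta> * \<phi> f Imat"
      using W_left[of "\<phi> f" \<beta> Imat] assms that G_I by (simp add: Hom_iff)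
    finally show ?thesis by (simp add: lamH_def)
  qed
  then show ?thesis using assms by (simp add: eqv_def lamH_def Hom_iff)
qed

lemma Hom_eq_zero: assumes "\<phi> \<in> Hom" "\<And>f. f \<in> W \<Longrightarrow> lamH \<phi> f = 0" shows "\<phi> = 0"
proof (rule ext)
  fix f show "\<phi> f = 0 f"
  proof (cases "f \<in> W")
    case True
    show ?thesis
    proof (rule ext)
      fix g show "\<phi> f g = 0 f g"
      proof (cases "G g")
        case True
        then show ?thesis using Hom_formula[OF assms(1) \<open>f \<in> W\<close> True] assms(2) W_rtrans \<open>f \<in> W\<close> iw
          by simp
      next
        case False
        then show ?thesis using W_out[of "\<phi> f" g] assms(1) \<open>f \<in> W\<close> by (simp add: Hom_iff)
      qed
    qed
  next
    case False then show ?thesis using assms(1) by (simp add: Hom_iff)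
  qed
qed

definition phiL :: "(('e mat2 \<Rightarrow> complex) \<Rightarrow> complex) \<Rightarrow> ('e mat2 \<Rightarrow> complex) \<Rightarrow> ('e mat2 \<Rightarrow> complex)"
  where "phiL l f g = (if f \<in> W \<and> G g then cB (bp g) * l (rtrans (kp g) f) else 0)"

lemma phiL_shift:
  assumes l: "eqv l" and f: "f \<in> W" and g: "G g" and b: "b \<in> B" and k: "k \<in> K"
  shows "phiL l f (mmul b (mmul g k)) = cB b * phiL l (rtrans k f) g"
proof -
  let ?g' = "mmul b (mmul g k)"
  have Gk: "G k" using k K_G by blast
  have Gb: "G b" using b B_G by blast
  have G': "G ?g'" using g Gk Gb G_mmul by blast
  have gg: "mmul (bp g) (kp g) = g" using iw(3)[OF g] by simp
  have "mmul (bp ?g') (kp ?g') = ?g'" using iw(3)[OF G'] by simp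
  also have "\<dots> = mmul b (mmul (mmul (bp g) (kp g)) k)" by (simp only: gg)
  finally have e: "mmul (bp ?g') (kp ?g') = mmul (mmul b (bp g)) (mmul (kp g) k)"
    by (simp add: mmul_assoc)
  note dc = decomp_change[OF iw(1)[OF G'] B_mmul[OF b iw(1)[OF g]] iw(2)[OF G'] K_mmul[OF iw(2)[OF g] k] e]
  define m where "m = mmul (kp ?g') (ginv (mmul (kp g) k))"
  have m: "m \<in> B \<inter> K" using dc unfolding m_def by blast
  have "rtrans (kp ?g') f = rtrans m (rtrans (mmul (kp g) k) f)"
    using dc(3) unfolding m_def by (simp add: rtrans_rtrans)
  moreover have "rtrans (mmul (kp g) k) f \<in> W" using W_rtrans f K_mmul iw(2)[OF g] k by blast
  ultimately have "l (rtrans (kp ?g') f) = cB m * l (rtrans (mmul (kp g) k) f)"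
    using l m by (simp add: eqv_def)
  moreover have "cB (bp ?g') * cB m = cB b * cB (bp g)"
    using dc(4) m iw(1)[OF G'] iw(1)[OF g] b unfolding m_def[symmetric]
    by (metis B_mmul IntD1 cB_mult)
  moreover have "rtrans (kp g) (rtrans k f) = rtrans (mmul (kp g) k) f" by (simp add: rtrans_rtrans)
  ultimately show ?thesis using G' g f W_rtrans[OF f k] unfolding phiL_def by (simp add: mult.assoc)
qed

lemma phiL_Hom: assumes l: "eqv l" shows "phiL l \<in> Hom"
proof -
  have W1: "phiL l f \<in> W" if f: "f \<in> W" for f
  proof -
    have "phiL l f g = 0" if "\<not> G g" for g using that by (simp add: phiL_def)
    moreover have "phiL l f (mmul b g) = cB b * phiL l f g" if "b \<in> B" "G g" for b g
      using phiL_shift[OF l f that(2) that(1) K_I] by simp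
    moreover have "phiL l f (mmul g k) = phiL l f g" if "k \<in> Kd d" for k g
    proof (cases "G g")
      case True
      have "rtrans k f = f" using f that by (simp add: W_iff rtrans_def fun_eq_iff)
      then show ?thesis using phiL_shift[OF l f True B_I Kd_K[OF that]] by simp
    next
      case False
      then have "\<not> G (mmul g k)" using G_of_mmul Kd_K K_G that by blast
      then show ?thesis using False by (simp add: phiL_def)
    qed
    ultimately show ?thesis by (simp add: W_iff)
  qed
  have "phiL l (rtrans k f) = rtrans k (phiL l f)" if "k \<in> K" "f \<in> W" for k f
  proof (rule ext)
    fix g
    show "phiL l (rtrans k f) g = rtrans k (phiL l f) g"
    proof (cases "G g")
      case True
      then show ?thesis using phiL_shift[OF l that(2) True B_I that(1)] by (simp add: rtrans_apply)
    next
      case False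
      then have "\<not> G (mmul g k)" using G_of_mmul K_G that by blast
      then show ?thesis using False by (simp add: phiL_def rtrans_apply)
    qed
  qed
  moreover have "phiL l (f + h) = phiL l f + phiL l h" if fh: "f \<in> W" "h \<in> W" for f h
  proof (rule ext)
    fix g
    have r: "rtrans k (f + h) = rtrans k f + rtrans k h" for k by (simp add: rtrans_def plus_fun_def)
    show "phiL l (f + h) g = (phiL l f + phiL l h) g"
    proof (cases "G g")
      case True
      have "l (rtrans (kp g) (f + h)) = l (rtrans (kp g) f) + l (rtrans (kp g) h)"
        unfolding r using l W_rtrans fh iw(2)[OF True] unfolding eqv_def by blast
      then show ?thesis using True fh W_add[OF fh] by (simp add: phiL_def algebra_simps)
    qed (simp add: phiL_def)
  qed
  moreover have "phiL l (\<lambda>g. c * f g) = (\<lambda>g. c * phiL l f g)" if fW: "f \<in> W" for c f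
  proof (rule ext)
    fix g
    have r: "rtrans k (\<lambda>g. c * f g) = (\<lambda>g. c * rtrans k f g)" for k by (simp add: rtrans_def)
    show "phiL l (\<lambda>g. c * f g) g = c * phiL l f g"
    proof (cases "G g")
      case True
      have "l (rtrans (kp g) (\<lambda>g. c * f g)) = c * l (rtrans (kp g) f)"
        unfolding r using l W_rtrans fW iw(2)[OF True] unfolding eqv_def by blast
      then show ?thesis using True fW W_scale[OF fW] by (simp add: phiL_def algebra_simps)
    qed (simp add: phiL_def)
  qed
  ultimately show ?thesis using W1 by (simp add: Hom_iff phiL_def fun_eq_iff)
qed

lemma lamH_phiL: assumes l: "eqv l" and f: "f \<in> W" shows "lamH (phiL l) f = l f"
proof -
  have GI: "G Imat" by (rule G_I)
  have e: "mmul (bp Imat) (kp Imat) = mmul Imat Imat" using iw[OF GI] by simp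
  note dc = decomp_change[OF iw(1)[OF GI] B_I iw(2)[OF GI] K_I e]
  have kpB: "kp Imat \<in> B" using dc(1) by simp
  have "l (rtrans (kp Imat) f) = cB (kp Imat) * l f" using l kpB iw(2)[OF GI] f by (simp add: eqv_def)
  moreover have "cB (bp Imat) * cB (kp Imat) = 1"
    using cB_mult[OF iw(1)[OF GI] kpB] iw(3)[OF GI] by simp
  ultimately show ?thesis using f GI by (simp add: lamH_def phiL_def mult.assoc[symmetric])
qed

end

context U11 begin

definition DC :: "'e mat2 \<Rightarrow> 'e mat2 set" where
  "DC x = {mmul b (mmul x k) | b k. b \<in> B \<and> k \<in> Kd d}"

lemma DC_I: "b \<in> B \<Longrightarrow> k \<in> Kd d \<Longrightarrow> mmul b (mmul x k) \<in> DC x"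
  unfolding DC_def by blast
lemma DC_E: "g \<in> DC x \<Longrightarrow> (\<And>b k. b \<in> B \<Longrightarrow> k \<in> Kd d \<Longrightarrow> g = mmul b (mmul x k) \<Longrightarrow> thesis) \<Longrightarrow> thesis"
  unfolding DC_def by blast
lemma DC_self: "x \<in> DC x" using DC_I[OF B_I Kd_I, of x] by simp
lemma DC_G: "G x \<Longrightarrow> g \<in> DC x \<Longrightarrow> G g"
  by (erule DC_E) (metis B_G G_mmul K_G Kd_K)
lemma DC_left: "b \<in> B \<Longrightarrow> g \<in> DC x \<Longrightarrow> mmul b g \<in> DC x"
  by (erule DC_E) (metis DC_I B_mmul mmul_assoc)
lemma DC_right: "k \<in> Kd d \<Longrightarrow> g \<in> DC x \<Longrightarrow> mmul g k \<in> DC x"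
  by (erule DC_E) (metis DC_I Kd_mmul mmul_assoc)
lemma DC_left_iff: "b \<in> B \<Longrightarrow> mmul b g \<in> DC x \<longleftrightarrow> g \<in> DC x"
  using DC_left[of "ginv b" "mmul b g" x] DC_left[of b g x] B_ginv B_G by auto
lemma DC_right_iff: "k \<in> Kd d \<Longrightarrow> mmul g k \<in> DC x \<longleftrightarrow> g \<in> DC x"
  using DC_right[of "ginv k" "mmul g k" x] DC_right[of k g x] Kd_ginv Kd_K K_G by auto
lemma DC_eq: assumes "G x" "y \<in> DC x" shows "DC y = DC x"
proof
  obtain b0 k0 where bk: "b0 \<in> B" "k0 \<in> Kd d" "y = mmul b0 (mmul x k0)" using assms(2) by (rule DC_E)
  show "DC y \<subseteq> DC x"
  proof
    fix g assume "g \<in> DC y"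
    then obtain b k where "b \<in> B" "k \<in> Kd d" "g = mmul b (mmul y k)" by (rule DC_E)
    then show "g \<in> DC x" using bk DC_I[OF B_mmul Kd_mmul] by (simp add: mmul_assoc)
  qed
  have xeq: "x = mmul (ginv b0) (mmul y (ginv k0))"
    using bk B_G[OF bk(1)] K_G[OF Kd_K[OF bk(2)]] by (simp add: mmul_assoc ginv_right)
  show "DC x \<subseteq> DC y"
  proof
    fix g assume "g \<in> DC x"
    then obtain b k where bk2: "b \<in> B" "k \<in> Kd d" "g = mmul b (mmul x k)" by (rule DC_E)
    then have "g = mmul (mmul b (ginv b0)) (mmul y (mmul (ginv k0) k))"
      using xeq by (simp add: mmul_assoc)
    then show "g \<in> DC y"
      using DC_I[OF B_mmul[OF bk2(1) B_ginv[OF bk(1)]] Kd_mmul[OF Kd_ginv[OF bk(2)] bk2(2)]] by simp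
  qed
qed
lemma DC_mult_K: assumes "\<beta> \<in> K" "g \<in> DC x" shows "mmul g \<beta> \<in> DC (mmul x \<beta>)"
proof -
  obtain b k where bk: "b \<in> B" "k \<in> Kd d" "g = mmul b (mmul x k)" using assms(2) by (rule DC_E)
  have "mmul g \<beta> = mmul b (mmul (mmul x \<beta>) (mmul (ginv \<beta>) (mmul k \<beta>)))"
    using bk assms K_G by (simp add: mmul_assoc)
  then show ?thesis using DC_I[OF bk(1) Kd_normal'[OF assms(1) bk(2)]] by simp
qed

lemma ex_wd: assumes x: "x \<in> K" and b: "b \<in> B" "b' \<in> B" and k: "k \<in> Kd d" "k' \<in> Kd d"
  and e: "mmul b (mmul x k) = mmul b' (mmul x k')"
  shows "cB b = cB b'"
proof -
  have G: "G b" "G b'" "G x" "G k" "G k'" using assms B_G K_G Kd_K by auto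
  define \<beta> where "\<beta> = mmul (ginv b') b"
  have "mmul \<beta> (mmul x k) = mmul x k'" unfolding \<beta>_def using e G by (simp add: mmul_assoc)
  then have "\<beta> = mmul x (mmul (mmul k' (ginv k)) (ginv x))"
    using G by (metis G_cancel_right mmul_assoc)
  then have "\<beta> \<in> Kd d" using Kd_normal[OF x Kd_mmul[OF k(2) Kd_ginv[OF k(1)]]] by (simp add: mmul_assoc)
  moreover have "\<beta> \<in> B" unfolding \<beta>_def using b B_mmul B_ginv by blast
  ultimately have "cB \<beta> = 1" using cB_NB by blast
  moreover have "b = mmul b' \<beta>" unfolding \<beta>_def using G by simp
  ultimately show ?thesis using cB_mult[OF b(2) \<open>\<beta> \<in> B\<close>] by simp
qed

definition ex :: "'e mat2 \<Rightarrow> 'e mat2 \<Rightarrow> complex" where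
  "ex x g = (if g \<in> DC x then cB (SOME b. b \<in> B \<and> (\<exists>k\<in>Kd d. g = mmul b (mmul x k))) else 0)"

lemma ex_val: assumes "x \<in> K" "b \<in> B" "k \<in> Kd d" shows "ex x (mmul b (mmul x k)) = cB b"
proof -
  let ?g = "mmul b (mmul x k)"
  have "\<exists>b'. b' \<in> B \<and> (\<exists>k\<in>Kd d. ?g = mmul b' (mmul x k))" using assms by blast
  from someI_ex[OF this] obtain k' where
    "(SOME b'. b' \<in> B \<and> (\<exists>k\<in>Kd d. ?g = mmul b' (mmul x k))) \<in> B" "k' \<in> Kd d"
    "?g = mmul (SOME b'. b' \<in> B \<and> (\<exists>k\<in>Kd d. ?g = mmul b' (mmul x k))) (mmul x k')" by blast
  then show ?thesis using ex_wd[OF assms(1) _ assms(2) _ assms(3)] DC_I[OF assms(2,3)]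
    unfolding ex_def by (metis (no_types, lifting))
qed
lemma ex_out: "g \<notin> DC x \<Longrightarrow> ex x g = 0" by (simp add: ex_def)
lemma ex_self: "x \<in> K \<Longrightarrow> ex x x = 1" using ex_val[OF _ B_I Kd_I, of x] by simp

lemma ex_W: assumes x: "x \<in> K" shows "ex x \<in> W"
proof -
  have Gx: "G x" using x K_G by blast
  have "ex x g = 0" if "\<not> G g" for g using that DC_G[OF Gx] ex_out by blast
  moreover have "ex x (mmul b g) = cB b * ex x g" if "b \<in> B" "G g" for b g
  proof (cases "g \<in> DC x")
    case True
    then obtain b0 k where "b0 \<in> B" "k \<in> Kd d" "g = mmul b0 (mmul x k)" by (rule DC_E)
    then show ?thesis using ex_val[OF x] that B_mmul cB_mult by (simp add: mmul_assoc[symmetric])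
  next
    case False then show ?thesis using DC_left_iff[OF that(1)] ex_out by simp
  qed
  moreover have "ex x (mmul g k) = ex x g" if "k \<in> Kd d" for k g
  proof (cases "g \<in> DC x")
    case True
    then obtain b0 k0 where "b0 \<in> B" "k0 \<in> Kd d" "g = mmul b0 (mmul x k0)" by (rule DC_E)
    then show ?thesis using ex_val[OF x] that Kd_mmul by (simp add: mmul_assoc)
  next
    case False then show ?thesis using DC_right_iff[OF that] ex_out by simp
  qed
  ultimately show ?thesis by (simp add: W_iff)
qed

lemma support: assumes Gx: "G x" and h: "h \<in> W" "h' \<in> W"
  and hs: "\<And>g. g \<notin> DC x \<Longrightarrow> h g = 0" and hs': "\<And>g. g \<notin> DC x \<Longrightarrow> h' g = 0" and h1: "h' x = 1"
  shows "h = (\<lambda>g. h x * h' g)"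
proof (rule ext)
  fix g show "h g = h x * h' g"
  proof (cases "g \<in> DC x")
    case True
    then obtain b k where bk: "b \<in> B" "k \<in> Kd d" "g = mmul b (mmul x k)" by (rule DC_E)
    have Gxk: "G (mmul x k)" using Gx bk K_G Kd_K G_mmul by blast
    have "h g = cB b * h x" using W_left[OF h(1) bk(1) Gxk] W_right[OF h(1) bk(2)] bk by simp
    moreover have "h' g = cB b" using W_left[OF h(2) bk(1) Gxk] W_right[OF h(2) bk(2)] bk h1 by simp
    ultimately show ?thesis by simp
  next
    case False then show ?thesis using hs hs' by simp
  qed
qed

definition restr :: "'e mat2 set \<Rightarrow> ('e mat2 \<Rightarrow> complex) \<Rightarrow> ('e mat2 \<Rightarrow> complex)" where
  "restr D f = (\<lambda>g. if g \<in> D then f g else 0)"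

lemma restr_W: assumes "G x" "f \<in> W" shows "restr (DC x) f \<in> W"
  using assms DC_left_iff DC_right_iff unfolding W_iff restr_def by auto

lemma bad_zero:
  assumes x: "x \<in> K" and \<beta>: "\<beta> \<in> B \<inter> K" and b: "b \<in> B" and k: "k \<in> Kd d"
    and e: "mmul x \<beta> = mmul b (mmul x k)" and ne: "cB \<beta> \<noteq> cB b" and l: "eqv l"
  shows "l (ex x) = 0"
proof -
  have Gx: "G x" using x K_G by blast
  have G\<beta>: "G \<beta>" using \<beta> K_G by blast
  let ?h = "rtrans \<beta> (ex x)"
  have hW: "?h \<in> W" using W_rtrans[OF ex_W[OF x]] \<beta> by blast
  have DCeq: "DC (mmul x \<beta>) = DC x" using DC_eq[OF Gx] e DC_I[OF b k] by simp
  have "?h g = 0" if "g \<notin> DC x" for g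
  proof (rule ccontr)
    assume "?h g \<noteq> 0"
    then have "mmul g \<beta> \<in> DC x" using ex_out by (auto simp: rtrans_apply)
    then have "mmul g \<beta> \<in> DC (mmul x \<beta>)" using DCeq by simp
    then have "mmul (mmul g \<beta>) (ginv \<beta>) \<in> DC (mmul (mmul x \<beta>) (ginv \<beta>))"
      using DC_mult_K K_ginv \<beta> by blast
    then show False using that G\<beta> by simp
  qed
  moreover have "?h x = cB b" using e ex_val[OF x b k] by (simp add: rtrans_apply)
  ultimately have "?h = (\<lambda>g. cB b * ex x g)"
    using support[OF Gx hW ex_W[OF x]] ex_out ex_self[OF x] by auto
  then have "l ?h = cB b * l (ex x)" using l ex_W[OF x] by (simp add: eqv_def)
  moreover have "l ?h = cB \<beta> * l (ex x)" using l ex_W[OF x] \<beta> by (simp add: eqv_def)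
  ultimately show ?thesis using ne by simp
qed

abbreviation HB where "HB \<equiv> B \<inter> K"
abbreviation NB where "NB \<equiv> B \<inter> Kd d"

definition cos :: "'e mat2 \<Rightarrow> 'e mat2 set" where "cos \<beta> = {mmul \<beta> n | n. n \<in> NB}"
definition CS where "CS = cos ` HB"
definition rep :: "'e mat2 set \<Rightarrow> 'e mat2" where "rep C = (SOME \<beta>. \<beta> \<in> C)"

lemma NB_I: "Imat \<in> NB" using B_I Kd_I by simp
lemma NB_mmul: "n \<in> NB \<Longrightarrow> n' \<in> NB \<Longrightarrow> mmul n n' \<in> NB" using B_mmul Kd_mmul by simp
lemma NB_ginv: "n \<in> NB \<Longrightarrow> ginv n \<in> NB" using B_ginv Kd_ginv by simp
lemma NB_HB: "n \<in> NB \<Longrightarrow> n \<in> HB" using Kd_K by blast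
lemma HB_mmul: "a \<in> HB \<Longrightarrow> b \<in> HB \<Longrightarrow> mmul a b \<in> HB" using B_mmul K_mmul by simp
lemma HB_ginv: "a \<in> HB \<Longrightarrow> ginv a \<in> HB" using B_ginv K_ginv by simp
lemma HB_G: "a \<in> HB \<Longrightarrow> G a" using K_G by simp
lemma NB_normal: "\<beta> \<in> HB \<Longrightarrow> n \<in> NB \<Longrightarrow> mmul (ginv \<beta>) (mmul n \<beta>) \<in> NB"
  using Kd_normal' B_mmul B_ginv by simp

lemma cos_self: "\<beta> \<in> cos \<beta>" unfolding cos_def using NB_I by force
lemma cos_sub: "\<beta> \<in> HB \<Longrightarrow> cos \<beta> \<subseteq> HB" unfolding cos_def using HB_mmul NB_HB by blast
lemma cos_eq: assumes "\<beta> \<in> HB" "\<gamma> \<in> cos \<beta>" shows "cos \<gamma> = cos \<beta>"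
proof -
  obtain n where n: "n \<in> NB" "\<gamma> = mmul \<beta> n" using assms(2) unfolding cos_def by blast
  have "cos \<gamma> \<subseteq> cos \<beta>"
  proof
    fix y assume "y \<in> cos \<gamma>"
    then obtain m where m: "m \<in> NB" "y = mmul \<gamma> m" unfolding cos_def by blast
    then have "y = mmul \<beta> (mmul n m)" using n by (simp add: mmul_assoc)
    then show "y \<in> cos \<beta>" unfolding cos_def using NB_mmul[OF n(1) m(1)] by blast
  qed
  moreover have bg: "\<beta> = mmul \<gamma> (ginv n)" using n NB_HB HB_G by simp
  have "cos \<beta> \<subseteq> cos \<gamma>"
  proof
    fix y assume "y \<in> cos \<beta>"
    then obtain m where m: "m \<in> NB" "y = mmul \<beta> m" unfolding cos_def by blast
    then have "y = mmul \<gamma> (mmul (ginv n) m)" using bg by (simp add: mmul_assoc)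
    then show "y \<in> cos \<gamma>" unfolding cos_def using NB_mmul[OF NB_ginv[OF n(1)] m(1)] by blast
  qed
  ultimately show ?thesis by blast
qed
lemma rep_in: "C \<in> CS \<Longrightarrow> rep C \<in> C"
  unfolding CS_def rep_def using cos_self by (metis image_iff someI_ex)
lemma rep_HB: "C \<in> CS \<Longrightarrow> rep C \<in> HB"
  using rep_in cos_sub unfolding CS_def by blast
lemma cos_rep: "C \<in> CS \<Longrightarrow> cos (rep C) = C"
  using rep_in cos_eq unfolding CS_def by blast
lemma rep_cos: "\<beta> \<in> HB \<Longrightarrow> \<exists>n\<in>NB. rep (cos \<beta>) = mmul \<beta> n"
  using rep_in[of "cos \<beta>"] unfolding CS_def cos_def by blast

definition lam :: "'e mat2 \<Rightarrow> ('e mat2 \<Rightarrow> complex) \<Rightarrow> complex" where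
  "lam x f = (\<Sum>C\<in>CS. inverse (cB (rep C)) * f (mmul x (rep C)))"

lemma term_inv: assumes "f \<in> W" "\<beta> \<in> HB" "n \<in> NB"
  shows "inverse (cB (mmul \<beta> n)) * f (mmul x (mmul \<beta> n)) = inverse (cB \<beta>) * f (mmul x \<beta>)"
proof -
  have "cB (mmul \<beta> n) = cB \<beta>" using cB_mult[of \<beta> n] cB_NB[of n] assms by simp
  moreover have "f (mmul x (mmul \<beta> n)) = f (mmul x \<beta>)"
    using W_right[OF assms(1), of n "mmul x \<beta>"] assms by (simp add: mmul_assoc)
  ultimately show ?thesis by simp
qed

lemma term_rep: assumes "f \<in> W" "C \<in> CS" "\<gamma> \<in> C"
  shows "inverse (cB (rep C)) * f (mmul x (rep C)) = inverse (cB \<gamma>) * f (mmul x \<gamma>)"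
proof -
  obtain \<beta> where \<beta>: "\<beta> \<in> HB" "C = cos \<beta>" using assms(2) unfolding CS_def by blast
  obtain n1 where n1: "n1 \<in> NB" "rep C = mmul \<beta> n1" using rep_in[OF assms(2)] \<beta> unfolding cos_def by blast
  obtain n2 where n2: "n2 \<in> NB" "\<gamma> = mmul \<beta> n2" using assms(3) \<beta> unfolding cos_def by blast
  show ?thesis using term_inv[OF assms(1) \<beta>(1) n1(1)] term_inv[OF assms(1) \<beta>(1) n2(1)] n1 n2 by simp
qed

lemma lam_eqv: assumes fin: "finite CS" and x: "x \<in> K" shows "eqv (lam x)"
proof -
  have "lam x (rtrans \<beta>0 f) = cB \<beta>0 * lam x f" if b0: "\<beta>0 \<in> HB" and f: "f \<in> W" for \<beta>0 f
  proof -
    define T where "T \<gamma> = inverse (cB \<gamma>) * f (mmul x \<gamma>)" for \<gamma>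
    define \<sigma> where "\<sigma> C = cos (mmul (rep C) \<beta>0)" for C
    define \<tau> where "\<tau> C = cos (mmul (rep C) (ginv \<beta>0))" for C
    have \<sigma>CS: "\<sigma> C \<in> CS" if "C \<in> CS" for C
      unfolding \<sigma>_def CS_def using rep_HB[OF that] b0 HB_mmul by blast
    have \<tau>CS: "\<tau> C \<in> CS" if "C \<in> CS" for C
      unfolding \<tau>_def CS_def using rep_HB[OF that] b0 HB_mmul HB_ginv by blast
    have st: "\<sigma> (\<tau> C) = C" if "C \<in> CS" for C
    proof -
      have r: "rep C \<in> HB" using rep_HB that by blast
      obtain n where n: "n \<in> NB" "rep (\<tau> C) = mmul (mmul (rep C) (ginv \<beta>0)) n"
        using rep_cos[of "mmul (rep C) (ginv \<beta>0)"] r b0 HB_mmul HB_ginv unfolding \<tau>_def by blast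
      have "mmul (rep (\<tau> C)) \<beta>0 = mmul (rep C) (mmul (ginv \<beta>0) (mmul n \<beta>0))"
        using n(2) b0 HB_G by (simp add: mmul_assoc)
      moreover have "mmul (ginv \<beta>0) (mmul n \<beta>0) \<in> NB"
        using NB_normal[OF b0 n(1)] .
      ultimately have "mmul (rep (\<tau> C)) \<beta>0 \<in> cos (rep C)" unfolding cos_def by blast
      then show ?thesis unfolding \<sigma>_def using cos_eq[OF r] cos_rep[OF that] by simp
    qed
    have ts: "\<tau> (\<sigma> C) = C" if "C \<in> CS" for C
    proof -
      have r: "rep C \<in> HB" using rep_HB that by blast
      obtain n where n: "n \<in> NB" "rep (\<sigma> C) = mmul (mmul (rep C) \<beta>0) n"
        using rep_cos[of "mmul (rep C) \<beta>0"] r b0 HB_mmul unfolding \<sigma>_def by blast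
      have "mmul (rep (\<sigma> C)) (ginv \<beta>0) = mmul (rep C) (mmul \<beta>0 (mmul n (ginv \<beta>0)))"
        using n(2) by (simp add: mmul_assoc)
      moreover have "mmul \<beta>0 (mmul n (ginv \<beta>0)) \<in> NB"
        using NB_normal[OF b0 n(1)] HB_G[OF b0] by (metis NB_normal HB_ginv b0 ginv_ginv n(1))
      ultimately have "mmul (rep (\<sigma> C)) (ginv \<beta>0) \<in> cos (rep C)" unfolding cos_def by blast
      then show ?thesis unfolding \<tau>_def using cos_eq[OF r] cos_rep[OF that] by simp
    qed
    have "lam x (rtrans \<beta>0 f) = (\<Sum>C\<in>CS. cB \<beta>0 * T (mmul (rep C) \<beta>0))"
      unfolding lam_def T_def
    proof (rule sum.cong[OF refl])
      fix C assume C: "C \<in> CS"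
      have "cB (mmul (rep C) \<beta>0) = cB (rep C) * cB \<beta>0" using cB_mult rep_HB[OF C] b0 by simp
      then show "inverse (cB (rep C)) * rtrans \<beta>0 f (mmul x (rep C)) =
          cB \<beta>0 * (inverse (cB (mmul (rep C) \<beta>0)) * f (mmul x (mmul (rep C) \<beta>0)))"
        using cB_nz[of \<beta>0] b0 by (simp add: rtrans_apply mmul_assoc field_simps)
    qed
    also have "\<dots> = (\<Sum>C\<in>CS. cB \<beta>0 * T (rep (\<sigma> C)))"
    proof (rule sum.cong[OF refl])
      fix C assume C: "C \<in> CS"
      have "mmul (rep C) \<beta>0 \<in> \<sigma> C" unfolding \<sigma>_def using cos_self by blast
      then show "cB \<beta>0 * T (mmul (rep C) \<beta>0) = cB \<beta>0 * T (rep (\<sigma> C))"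
        using term_rep[OF f \<sigma>CS[OF C]] unfolding T_def by simp
    qed
    also have "\<dots> = (\<Sum>C\<in>CS. cB \<beta>0 * T (rep C))"
      by (rule sum.reindex_bij_witness[where i=\<tau> and j=\<sigma>]) (auto simp: st ts \<sigma>CS \<tau>CS)
    finally show ?thesis unfolding lam_def T_def by (simp add: sum_distrib_left)
  qed
  moreover have "lam x (f + h) = lam x f + lam x h" for f h
    unfolding lam_def by (simp add: sum.distrib algebra_simps)
  moreover have "lam x (\<lambda>g. c * f g) = c * lam x f" for c f
    unfolding lam_def by (simp add: sum_distrib_left algebra_simps)
  ultimately show ?thesis unfolding eqv_def by blast
qed

lemma lam_other: assumes "\<And>\<beta>. \<beta> \<in> HB \<Longrightarrow> mmul x \<beta> \<notin> DC y" shows "lam x (ex y) = 0"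
  unfolding lam_def using assms rep_HB ex_out by simp

definition good :: "'e mat2 \<Rightarrow> bool" where
  "good x \<longleftrightarrow> (\<forall>\<beta>\<in>HB. \<forall>b\<in>B. \<forall>k\<in>Kd d. mmul x \<beta> = mmul b (mmul x k) \<longrightarrow> cB \<beta> = cB b)"

lemma lam_self: assumes fin: "finite CS" and x: "x \<in> K" and gd: "good x" shows "lam x (ex x) \<noteq> 0"
proof -
  have "lam x (ex x) = (\<Sum>C\<in>CS. if mmul x (rep C) \<in> DC x then 1 else 0)"
    unfolding lam_def
  proof (rule sum.cong[OF refl])
    fix C assume C: "C \<in> CS"
    show "inverse (cB (rep C)) * ex x (mmul x (rep C)) = (if mmul x (rep C) \<in> DC x then 1 else 0)"
    proof (cases "mmul x (rep C) \<in> DC x")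
      case True
      then obtain b k where bk: "b \<in> B" "k \<in> Kd d" "mmul x (rep C) = mmul b (mmul x k)" by (rule DC_E)
      then have "cB (rep C) = cB b" using gd rep_HB[OF C] unfolding good_def by blast
      then show ?thesis using True bk ex_val[OF x bk(1,2)] cB_nz[OF bk(1)] by simp
    qed (simp add: ex_out)
  qed
  also have "\<dots> = of_nat (card {C\<in>CS. mmul x (rep C) \<in> DC x})"
    using fin by (simp add: sum.If_cases Int_def conj_commute)
  finally have e: "lam x (ex x) = of_nat (card {C\<in>CS. mmul x (rep C) \<in> DC x})" .
  have C0: "cos Imat \<in> CS" unfolding CS_def using B_I K_I by blast
  obtain n where n: "n \<in> NB" "rep (cos Imat) = mmul Imat n" using rep_cos B_I K_I by blast
  have "mmul Imat (mmul x n) \<in> DC x" using DC_I[OF B_I] n by blast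
  then have "mmul x (rep (cos Imat)) \<in> DC x" using n by simp
  then have "card {C\<in>CS. mmul x (rep C) \<in> DC x} \<noteq> 0" using C0 fin by (auto simp: card_eq_0_iff)
  then show ?thesis using e by simp
qed

end

definition scH :: "complex \<Rightarrow> (('a \<Rightarrow> complex) \<Rightarrow> ('a \<Rightarrow> complex)) \<Rightarrow> (('a \<Rightarrow> complex) \<Rightarrow> ('a \<Rightarrow> complex))"
  where "scH c \<phi> = (\<lambda>f g. c * \<phi> f g)"

lemma vs_scH: "vector_space (scH :: complex \<Rightarrow> (('a \<Rightarrow> complex) \<Rightarrow> ('a \<Rightarrow> complex)) \<Rightarrow> _)"
  by unfold_locales (simp_all add: scH_def fun_eq_iff algebra_simps)

lemma cdimH_eq: "cdimH S = vector_space.dim scH S"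
  unfolding cdimH_def scH_def by simp

lemma sum_apply1: "finite A \<Longrightarrow> (sum F A) g = (\<Sum>a\<in>A. F a g)"
  by (induction A rule: finite_induct) simp_all

lemma sum_apply2: "finite A \<Longrightarrow> (sum F A) f g = (\<Sum>a\<in>A. F a f g)"
  by (induction A rule: finite_induct) simp_all

context U11 begin

lemma Hom_0: "(0 :: ('e mat2 \<Rightarrow> complex) \<Rightarrow> ('e mat2 \<Rightarrow> complex)) \<in> Hom"
proof -
  have z: "(\<lambda>x::'e mat2. 0::complex) \<in> W" using W_zero unfolding zero_fun_def .
  show ?thesis by (simp add: Hom_iff z rtrans_def fun_eq_iff zero_fun_def)
qed
lemma Hom_plus: assumes "\<phi> \<in> Hom" "\<psi> \<in> Hom" shows "\<phi> + \<psi> \<in> Hom"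
proof -
  have "rtrans k (\<phi> f + \<psi> f) = rtrans k (\<phi> f) + rtrans k (\<psi> f)" for k f
    by (simp add: rtrans_def plus_fun_def)
  then show ?thesis using assms unfolding Hom_iff by (auto simp: W_add fun_eq_iff algebra_simps)
qed
lemma Hom_sc: assumes "\<phi> \<in> Hom" shows "scH c \<phi> \<in> Hom"
proof -
  have "rtrans k (\<lambda>g. c * \<phi> f g) = (\<lambda>g. c * rtrans k (\<phi> f) g)" for k f
    by (simp add: rtrans_def)
  then show ?thesis using assms unfolding Hom_iff scH_def by (auto simp: W_scale fun_eq_iff algebra_simps)
qed
lemma Hom_minus: assumes "\<phi> \<in> Hom" "\<psi> \<in> Hom" shows "\<phi> - \<psi> \<in> Hom"
proof -
  have "\<phi> - \<psi> = \<phi> + scH (-1) \<psi>" by (simp add: scH_def fun_eq_iff)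
  then show ?thesis using Hom_plus Hom_sc assms by metis
qed
lemma Hom_sumH: "finite A \<Longrightarrow> (\<And>a. a \<in> A \<Longrightarrow> F a \<in> Hom) \<Longrightarrow> sum F A \<in> Hom"
  by (induction A rule: finite_induct) (auto intro: Hom_0 Hom_plus)

theorem dim_thm:
  fixes xs :: "nat \<Rightarrow> 'e mat2" and J :: "nat set"
  assumes fin: "finite CS"
   and xsK: "\<And>j. j \<le> d \<Longrightarrow> xs j \<in> K"
   and Jsub: "J \<subseteq> {..d}"
   and gdJ: "\<And>j. j \<in> J \<Longrightarrow> good (xs j)"
   and bad: "\<And>j. j \<le> d \<Longrightarrow> j \<notin> J \<Longrightarrow>
      \<exists>\<beta>\<in>HB. \<exists>b\<in>B. \<exists>k\<in>Kd d. mmul (xs j) \<beta> = mmul b (mmul (xs j) k) \<and> cB \<beta> \<noteq> cB b"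
   and cover: "\<And>g. G g \<Longrightarrow> \<exists>j\<le>d. \<exists>\<beta>\<in>HB. g \<in> DC (mmul (xs j) \<beta>)"
   and sep: "\<And>i j \<beta>. i \<le> d \<Longrightarrow> j \<le> d \<Longrightarrow> i \<noteq> j \<Longrightarrow> \<beta> \<in> HB \<Longrightarrow> mmul (xs i) \<beta> \<notin> DC (xs j)"
  shows "cdimH Hom = card J"
proof -
  have finJ: "finite J" using Jsub finite_subset by blast
  have xsG: "G (xs j)" if "j \<le> d" for j using xsK[OF that] K_G by blast
  have vanish: "\<psi> = 0" if \<psi>: "\<psi> \<in> Hom" and z: "\<And>j. j \<in> J \<Longrightarrow> lamH \<psi> (ex (xs j)) = 0" for \<psi>
  proof -
    let ?l = "lamH \<psi>"
    have l: "eqv ?l" using lamH_eqv[OF \<psi>] .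
    have z2: "?l (ex (xs j)) = 0" if jd: "j \<le> d" for j
    proof (cases "j \<in> J")
      case True then show ?thesis using z by blast
    next
      case False
      then obtain \<beta> b k where "\<beta> \<in> HB" "b \<in> B" "k \<in> Kd d"
        "mmul (xs j) \<beta> = mmul b (mmul (xs j) k)" "cB \<beta> \<noteq> cB b" using bad[OF jd False] by blast
      then show ?thesis using bad_zero[OF xsK[OF jd] _ _ _ _ _ l] by blast
    qed
    define DCs where "DCs = (\<lambda>(j, C). DC (mmul (xs j) (rep C))) ` ({..d} \<times> CS)"
    have finD: "finite DCs" unfolding DCs_def using fin by simp
    have DCsG: "\<exists>y. G y \<and> D = DC y" if "D \<in> DCs" for D
      using that unfolding DCs_def using xsG rep_HB HB_G G_mmul by fastforce
    have "?l f = 0" if f: "f \<in> W" for f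
    proof -
      have rW: "restr D f \<in> W" if "D \<in> DCs" for D using DCsG[OF that] restr_W f by blast
      have fsum: "f = (\<Sum>D\<in>DCs. restr D f)"
      proof (rule ext)
        fix g
        show "f g = (\<Sum>D\<in>DCs. restr D f) g"
        proof (cases "G g")
          case False
          have "(\<Sum>D\<in>DCs. restr D f) g = (\<Sum>D\<in>DCs. restr D f g)" using finD
            by (simp add: sum_apply1)
          also have "\<dots> = 0"
            using DCsG DC_G False by (intro sum.neutral) (auto simp: restr_def)
          finally show ?thesis using W_out[OF f False] by simp
        next
          case True
          obtain j \<beta> where j: "j \<le> d" "\<beta> \<in> HB" "g \<in> DC (mmul (xs j) \<beta>)" using cover[OF True] by blast
          obtain n where n: "n \<in> NB" "rep (cos \<beta>) = mmul \<beta> n" using rep_cos[OF j(2)] by blast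
          have cs: "cos \<beta> \<in> CS" unfolding CS_def using j by blast
          have G1: "G (mmul (xs j) \<beta>)" using xsG j HB_G G_mmul by blast
          have "DC (mmul (xs j) (rep (cos \<beta>))) = DC (mmul (xs j) \<beta>)"
            using DC_eq[OF G1] DC_I[OF B_I, of n "mmul (xs j) \<beta>"] n by (simp add: mmul_assoc)
          then have D0: "DC g \<in> DCs" using DC_eq[OF G1 j(3)] j cs unfolding DCs_def by force
          have iff: "g \<in> D \<longleftrightarrow> D = DC g" if DD: "D \<in> DCs" for D
          proof -
            obtain y where y: "G y" "D = DC y" using DCsG[OF DD] by blast
            show ?thesis
            proof
              assume "g \<in> D" then show "D = DC g" using DC_eq[OF y(1), of g] y by simp
            next
              assume "D = DC g" then show "g \<in> D" using DC_self by simp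
            qed
          qed
          have "(\<Sum>D\<in>DCs. restr D f) g = (\<Sum>D\<in>DCs. restr D f g)" using finD by (simp add: sum_apply1)
          also have "\<dots> = (\<Sum>D\<in>DCs. if D = DC g then f g else 0)"
            using iff by (intro sum.cong) (auto simp: restr_def)
          also have "\<dots> = f g" using finD D0 by simp
          finally show ?thesis by simp
        qed
      qed
      have "?l f = (\<Sum>D\<in>DCs. ?l (restr D f))"
        by (subst fsum) (rule eqv_sum[OF l finD rW])
      also have "\<dots> = 0"
      proof (rule sum.neutral, rule ballI)
        fix D assume D: "D \<in> DCs"
        then obtain j C where jC: "j \<le> d" "C \<in> CS" "D = DC (mmul (xs j) (rep C))"
          unfolding DCs_def by auto
        define \<beta> where "\<beta> = rep C"
        have \<beta>: "\<beta> \<in> HB" using rep_HB jC unfolding \<beta>_def by blast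
        define x where "x = mmul (xs j) \<beta>"
        have Gx: "G x" unfolding x_def using xsG jC \<beta> HB_G G_mmul by blast
        let ?h = "rtrans (ginv \<beta>) (ex (xs j))"
        have hW: "?h \<in> W" using W_rtrans[OF ex_W[OF xsK[OF jC(1)]]] HB_ginv[OF \<beta>] by blast
        have hs: "?h g = 0" if "g \<notin> DC x" for g
        proof (rule ccontr)
          assume "?h g \<noteq> 0"
          then have "mmul g (ginv \<beta>) \<in> DC (xs j)" using ex_out by (auto simp: rtrans_apply)
          then have "mmul (mmul g (ginv \<beta>)) \<beta> \<in> DC (mmul (xs j) \<beta>)" using DC_mult_K \<beta> by blast
          then show False using that HB_G[OF \<beta>] unfolding x_def by simp
        qed
        have h1: "?h x = 1" unfolding x_def using HB_G[OF \<beta>] ex_self[OF xsK[OF jC(1)]]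
          by (simp add: rtrans_apply mmul_assoc ginv_right)
        have rs: "restr D f = (\<lambda>g. restr D f x * ?h g)"
          using support[OF Gx rW[OF D] hW _ hs h1] jC unfolding x_def \<beta>_def restr_def by auto
        have "?l (restr D f) = restr D f x * ?l ?h"
          using l hW by (subst rs) (simp add: eqv_def)
        also have "?l ?h = cB (ginv \<beta>) * ?l (ex (xs j))"
          using l HB_ginv[OF \<beta>] ex_W[OF xsK[OF jC(1)]] by (simp add: eqv_def)
        finally show "?l (restr D f) = 0" using z2[OF jC(1)] by simp
      qed
      finally show ?thesis .
    qed
    then show ?thesis using Hom_eq_zero[OF \<psi>] by blast
  qed
  define \<Phi> where "\<Phi> j = phiL (lam (xs j))" for j
  define N where "N j = lam (xs j) (ex (xs j))" for j
  have NJ: "N j \<noteq> 0" if "j \<in> J" for j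
    unfolding N_def using lam_self[OF fin xsK gdJ[OF that]] that Jsub by auto
  have \<Phi>H: "\<Phi> j \<in> Hom" if "j \<in> J" for j
    unfolding \<Phi>_def using phiL_Hom lam_eqv[OF fin xsK] that Jsub by auto
  have lamPhi: "lamH (\<Phi> j) (ex (xs i)) = (if i = j then N j else 0)" if "j \<in> J" "i \<le> d" for i j
  proof -
    have jd: "j \<le> d" using that Jsub by auto
    have "lamH (\<Phi> j) (ex (xs i)) = lam (xs j) (ex (xs i))"
      unfolding \<Phi>_def using lamH_phiL[OF lam_eqv[OF fin xsK[OF jd]] ex_W[OF xsK[OF that(2)]]] .
    moreover have "lam (xs j) (ex (xs i)) = 0" if "i \<noteq> j"
      using lam_other sep[OF jd \<open>i \<le> d\<close>] that by metis
    ultimately show ?thesis unfolding N_def by simp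
  qed
  have inj: "inj_on \<Phi> J"
  proof (rule inj_onI)
    fix i j assume ij: "i \<in> J" "j \<in> J" "\<Phi> i = \<Phi> j"
    show "i = j"
    proof (rule ccontr)
      assume "i \<noteq> j"
      have "lamH (\<Phi> i) (ex (xs i)) = N i" using lamPhi[of i i] ij(1) Jsub by auto
      moreover have "lamH (\<Phi> j) (ex (xs i)) = 0" using lamPhi[of j i] ij(1,2) Jsub \<open>i \<noteq> j\<close> by auto
      ultimately show False using ij NJ by metis
    qed
  qed
  interpret V: vector_space "scH :: complex \<Rightarrow> (('e mat2 \<Rightarrow> complex) \<Rightarrow> ('e mat2 \<Rightarrow> complex)) \<Rightarrow> _"
    by (rule vs_scH)
  let ?Bs = "\<Phi> ` J"
  have sub: "?Bs \<subseteq> Hom" using \<Phi>H by blast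
  have span: "Hom \<subseteq> V.span ?Bs"
  proof
    fix \<phi> assume \<phi>: "\<phi> \<in> Hom"
    define S where "S = (\<Sum>j\<in>J. scH (lamH \<phi> (ex (xs j)) / N j) (\<Phi> j))"
    have SH: "S \<in> Hom" unfolding S_def
      by (rule Hom_sumH[OF finJ]) (rule Hom_sc, rule \<Phi>H)
    have "\<phi> - S = 0"
    proof (rule vanish)
      show "\<phi> - S \<in> Hom" using Hom_minus \<phi> SH by blast
      fix i assume i: "i \<in> J"
      have id: "i \<le> d" using i Jsub by auto
      have "lamH S (ex (xs i)) = (\<Sum>j\<in>J. lamH \<phi> (ex (xs j)) / N j * lamH (\<Phi> j) (ex (xs i)))"
        unfolding S_def lamH_def using finJ by (simp add: sum_apply2 scH_def)
      also have "\<dots> = (\<Sum>j\<in>J. if j = i then lamH \<phi> (ex (xs i)) else 0)"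
        using lamPhi id NJ by (intro sum.cong) auto
      also have "\<dots> = lamH \<phi> (ex (xs i))" using finJ i by simp
      finally show "lamH (\<phi> - S) (ex (xs i)) = 0" by (simp add: lamH_def)
    qed
    then have "\<phi> = S" by simp
    moreover have "S \<in> V.span ?Bs" unfolding S_def
      by (intro V.span_sum V.span_scale V.span_base) auto
    ultimately show "\<phi> \<in> V.span ?Bs" by simp
  qed
  have indep: "V.independent ?Bs"
  proof -
    have "\<forall>v\<in>?Bs. c v = 0" if h: "(\<Sum>v\<in>?Bs. scH (c v) v) = 0" for c
    proof
      fix v assume "v \<in> ?Bs"
      then obtain i where i: "i \<in> J" "v = \<Phi> i" by blast
      have id: "i \<le> d" using i Jsub by auto
      have "0 = (\<Sum>v\<in>?Bs. scH (c v) v) (ex (xs i)) Imat" using h by simp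
      also have "\<dots> = (\<Sum>j\<in>J. c (\<Phi> j) * lamH (\<Phi> j) (ex (xs i)))"
        using finJ inj by (simp add: sum_apply2 sum.reindex scH_def lamH_def)
      also have "\<dots> = (\<Sum>j\<in>J. if j = i then c (\<Phi> i) * N i else 0)"
        using lamPhi id by (intro sum.cong) auto
      also have "\<dots> = c (\<Phi> i) * N i" using finJ i by simp
      finally show "c v = 0" using NJ[OF i(1)] i by simp
    qed
    then show ?thesis using finJ V.dependent_finite[of ?Bs] by auto
  qed
  have "card ?Bs = V.dim Hom" using V.basis_card_eq_dim[OF sub span indep] .
  moreover have "card ?Bs = card J" using card_image[OF inj] .
  ultimately show ?thesis by (simp add: cdimH_eq)
qed

end

context vs begin

lemma K_det_unit: assumes "k \<in> K" shows "unit (mdet k)"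
proof -
  have Gk: "G k" "allO k" using assms by (auto simp: K_iff)
  have "mdet k * mdet (ginv k) = 1" using mdet_mmul[of k "ginv k"] ginv_right[OF Gk(1)] by (simp add: Imat_def)
  moreover have "mdet (ginv k) = cj (mdet k)" by (cases k) (simp add: cj_simps mult.commute)
  moreover have "Oi (mdet k)"
    using Gk(2) by (cases k) (auto intro!: P_diff P_mult[of 0 _ 0, simplified])
  ultimately show ?thesis
    by (metis O_unit_factor P_cj unit_1)
qed

lemma ginv_mmul: "ginv (mmul a b) = mmul (ginv b) (ginv a)"
  by (cases a; cases b) (simp add: cj_add cj_mult algebra_simps)

lemma nm_mmul: "mmul (nm y) (nm y') = nm (y + y')" by (simp add: nm_def add.commute)
lemma ginv_nm: "ginv (nm y) = nm (cj y)" by (simp add: nm_def)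

lemma nm_K: assumes "y + cj y = 0" "Oi y" shows "nm y \<in> K"
proof -
  have g: "G (nm y)" using G_nm assms(1) by blast
  show ?thesis using g assms(2) unfolding K_iff by (simp add: nm_def)
qed
lemma nm_Kd: "y + cj y = 0 \<Longrightarrow> P n y \<Longrightarrow> nm y \<in> Kd n"
  using nm_K[of y] P_O by (simp add: Kd_iff nm_def Imat_def)

lemma row_ratio_B: assumes "G k" "ent22 k \<noteq> 0" shows "mmul k (ginv (nm (ent21 k / ent22 k))) \<in> B"
  and "ent21 k / ent22 k + cj (ent21 k / ent22 k) = 0"
proof -
  obtain a x c e where k: "k = M2 a x c e" by (cases k)
  have iso: "c * cj e + e * cj c = 0" using G_bottom_iso assms k by blast
  have enz: "e \<noteq> 0" using assms k by simp
  have "c / e + cj (c / e) = (c * cj e + e * cj c) / (e * cj e)"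
    using enz by (simp add: cj_divide field_simps)
  then show t: "ent21 k / ent22 k + cj (ent21 k / ent22 k) = 0" using iso k by simp
  have Gn: "G (nm (ent21 k / ent22 k))" using t G_nm by blast
  have eqn: "ent21 k * ent22 (nm (ent21 k / ent22 k)) = ent22 k * ent21 (nm (ent21 k / ent22 k))"
    using k enz by (simp add: nm_def)
  from same_row_B[OF assms(1) Gn eqn] show "mmul k (ginv (nm (ent21 k / ent22 k))) \<in> B" .
qed

end

context U11 begin

definition xs :: "nat \<Rightarrow> 'e mat2" where "xs j = nm (s * pi ^ j)"

lemma spj: "s * pi ^ j + cj (s * pi ^ j) = 0" by (simp add: cj_simps pi)
lemma P_spj: "P j (s * pi ^ j)" using P_Omult[OF O_s(1) P_pi_pow] .
lemma v_spj: "v (s * pi ^ j) = int j" using pi s_nz by (simp add: v_mult v_power v_s)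
lemma spj_nz: "s * pi ^ j \<noteq> 0" using pi s_nz by simp

lemma xs_K: "xs j \<in> K" unfolding xs_def using nm_K[OF spj] P_O[OF P_spj] by blast

lemma fin_CS: "finite CS"
proof -
  obtain R where R: "finite R" "\<And>x. Oi x \<Longrightarrow> \<exists>r\<in>R. P d (x - r)" using reps_E[of d] by blast
  define MS where "MS = (\<lambda>(a, b, c, e). M2 a b c e) ` (R \<times> R \<times> R \<times> R)"
  have finMS: "finite MS" unfolding MS_def using R by simp
  define pick where "pick m = (SOME \<beta>. \<beta> \<in> HB \<and> cong d \<beta> m)" for m
  have "CS \<subseteq> (\<lambda>m. cos (pick m)) ` MS"
  proof
    fix C assume "C \<in> CS"
    then obtain \<beta> where \<beta>: "\<beta> \<in> HB" "C = cos \<beta>" unfolding CS_def by blast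
    obtain a b c e where be: "\<beta> = M2 a b c e" by (cases \<beta>)
    have O: "Oi a" "Oi b" "Oi c" "Oi e" using \<beta> be by (auto simp: K_iff)
    obtain ra rb rc re where r: "ra \<in> R" "rb \<in> R" "rc \<in> R" "re \<in> R"
      "P d (a - ra)" "P d (b - rb)" "P d (c - rc)" "P d (e - re)" using R(2) O by metis
    define m where "m = M2 ra rb rc re"
    have mMS: "m \<in> MS" unfolding MS_def m_def using r by force
    have cm: "cong d \<beta> m" using r be m_def by simp
    have ex: "\<exists>\<beta>'. \<beta>' \<in> HB \<and> cong d \<beta>' m" using \<beta> cm by blast
    define \<beta>' where "\<beta>' = pick m"
    have \<beta>': "\<beta>' \<in> HB" "cong d \<beta>' m" using someI_ex[OF ex] unfolding \<beta>'_def pick_def by blast+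
    have c1: "cong d \<beta> \<beta>'" using cm \<beta>'(2) cong_sym cong_trans by blast
    have "cong d (mmul (ginv \<beta>') \<beta>) (mmul (ginv \<beta>') \<beta>')"
      using cong_mmul_left[OF c1] \<beta>' by (simp add: K_iff allO_ginv)
    then have "cong d (mmul (ginv \<beta>') \<beta>) Imat" using ginv_left \<beta>' K_G by simp
    then have n: "mmul (ginv \<beta>') \<beta> \<in> NB" using \<beta> \<beta>' HB_mmul HB_ginv by (simp add: Kd_iff)
    have "\<beta> = mmul \<beta>' (mmul (ginv \<beta>') \<beta>)" using \<beta>' HB_G by simp
    then have "\<beta> \<in> cos \<beta>'" using n unfolding cos_def by blast
    then have "cos \<beta> = cos \<beta>'" using cos_eq[OF \<beta>'(1)] by blast
    then show "C \<in> (\<lambda>m. cos (pick m)) ` MS" using \<beta>(2) mMS \<beta>'_def by blast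
  qed
  then show ?thesis using finMS finite_surj by blast
qed

text \<open>the separating invariant\<close>
definition Pm :: "nat \<Rightarrow> 'e mat2 \<Rightarrow> bool" where
  "Pm m g \<longleftrightarrow> (\<exists>x. P m x \<and> ent21 g = x * ent22 g)"

lemma Pm_L: assumes "b \<in> B" "Pm m g" shows "Pm m (mmul b g)"
proof -
  obtain a x e where b: "b = M2 a x 0 e" using B_M2 assms(1) by blast
  obtain y where y: "P m y" "ent21 g = y * ent22 g" using assms(2) unfolding Pm_def by blast
  show ?thesis unfolding Pm_def using y b by (cases g) (auto intro!: exI[of _ y])
qed

lemma Pm_R: assumes "\<beta> \<in> HB" "1 \<le> m" "Pm m g" shows "Pm m (mmul g \<beta>)"
proof -
  obtain \<alpha> \<mu> \<delta> where b: "\<beta> = M2 \<alpha> \<mu> 0 \<delta>" using B_M2 assms(1) by blast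
  have bO: "Oi \<alpha>" "Oi \<mu>" "Oi \<delta>" using assms(1) b by (auto simp: K_iff)
  have "unit (mdet \<beta>)" using K_det_unit assms(1) by blast
  then have ud: "unit \<delta>" using b bO O_unit_factor[of \<delta> \<alpha>] by (simp add: mult.commute)
  obtain x where x: "P m x" "ent21 g = x * ent22 g" using assms(3) unfolding Pm_def by blast
  obtain g1 g2 c e where g: "g = M2 g1 g2 c e" by (cases g)
  have c: "c = x * e" using x g by simp
  have xp: "P 1 x" using P_mono[OF assms(2) x(1)] .
  define u where "u = x * \<mu> + \<delta>"
  have u: "unit u" unfolding u_def using unit_perturb[OF ud P_multO[OF xp bO(2)]] by (simp add: add.commute)
  have "ent21 (mmul g \<beta>) = (x * \<alpha> / u) * ent22 (mmul g \<beta>)"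
    using g b c u unit_nz[OF u] by (simp add: u_def field_simps)
  moreover have "P m (x * \<alpha> / u)" using P_div_unit[OF P_multO[OF x(1) bO(1)] u] .
  ultimately show ?thesis unfolding Pm_def by blast
qed

lemma Pm_K: assumes "k \<in> Kd d" "1 \<le> m" "m \<le> d" "Pm m g" shows "Pm m (mmul g k)"
proof -
  obtain k11 k12 k21 k22 where k: "k = M2 k11 k12 k21 k22" by (cases k)
  have kk: "P d (k11 - 1)" "P d k12" "P d k21" "P d (k22 - 1)" "Oi k11" "Oi k12"
    using assms(1) k by (auto simp: Kd_iff Imat_def K_iff)
  obtain x where x: "P m x" "ent21 g = x * ent22 g" using assms(4) unfolding Pm_def by blast
  obtain g1 g2 c e where g: "g = M2 g1 g2 c e" by (cases g)
  have c: "c = x * e" using x g by simp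
  have xp: "P 1 x" using P_mono[OF assms(2) x(1)] .
  have u22: "unit k22" using unit_perturb[of 1 "k22 - 1"] P_mono[OF _ kk(4), of 1] assms by simp
  define u where "u = x * k12 + k22"
  have u: "unit u" unfolding u_def using unit_perturb[OF u22 P_multO[OF xp kk(6)]] by (simp add: add.commute)
  have "ent21 (mmul g k) = ((x * k11 + k21) / u) * ent22 (mmul g k)"
    using g k c u unit_nz[OF u] by (simp add: u_def field_simps)
  moreover have "P m ((x * k11 + k21) / u)"
    using P_div_unit[OF P_add[OF P_multO[OF x(1) kk(5)] P_mono[OF assms(3) kk(3)]] u] .
  ultimately show ?thesis unfolding Pm_def by blast
qed

lemma Pm_DC: assumes "G y" "g \<in> DC y" "1 \<le> m" "m \<le> d" shows "Pm m g \<longleftrightarrow> Pm m y"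
proof -
  obtain b k where bk: "b \<in> B" "k \<in> Kd d" "g = mmul b (mmul y k)" using assms(2) by (rule DC_E)
  have "y = mmul (ginv b) (mmul g (ginv k))" using bk B_G K_G Kd_K by (simp add: mmul_assoc ginv_right)
  then show ?thesis using bk Pm_L Pm_K assms B_ginv Kd_ginv by (metis mmul_assoc)
qed

lemma Pm_xs: "Pm m (xs j) \<longleftrightarrow> m \<le> j"
proof -
  have "Pm m (xs j) \<longleftrightarrow> P m (s * pi ^ j)" unfolding Pm_def xs_def nm_def by simp
  also have "\<dots> \<longleftrightarrow> m \<le> j" using v_spj spj_nz pi(1) by (simp add: inP_def)
  finally show ?thesis .
qed

lemma sep: assumes "i \<le> d" "j \<le> d" "i \<noteq> j" "\<beta> \<in> HB" shows "mmul (xs i) \<beta> \<notin> DC (xs j)"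
proof
  assume a: "mmul (xs i) \<beta> \<in> DC (xs j)"
  define m where "m = max i j"
  have m: "1 \<le> m" "m \<le> d" using assms unfolding m_def by auto
  have "Pm m (mmul (xs i) \<beta>) \<longleftrightarrow> Pm m (xs j)" using Pm_DC[OF K_G[OF xs_K] a m] .
  moreover have "Pm m (mmul (xs i) \<beta>) \<longleftrightarrow> Pm m (xs i)"
    using Pm_R[OF assms(4) m(1)] Pm_R[OF HB_ginv[OF assms(4)] m(1), of "mmul (xs i) \<beta>"] HB_G[OF assms(4)]
    by auto
  ultimately show False using Pm_xs assms(3) unfolding m_def by (auto simp: max_def split: if_splits)
qed

lemma row_DC:
  assumes k: "G k" "ent22 k \<noteq> 0" and z: "G z" "ent22 z \<noteq> 0"
    and P: "P d (ent21 k / ent22 k - ent21 z / ent22 z)"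
  shows "k \<in> DC z"
proof -
  define t where "t = ent21 k / ent22 k"
  define y where "y = ent21 z / ent22 z"
  have b1: "mmul k (ginv (nm t)) \<in> B" and t: "t + cj t = 0" using row_ratio_B[OF k] unfolding t_def by auto
  have b2: "mmul z (ginv (nm y)) \<in> B" and y: "y + cj y = 0" using row_ratio_B[OF z] unfolding y_def by auto
  have "(t - y) + cj (t - y) = (t + cj t) - (y + cj y)" by (simp add: cj_diff algebra_simps)
  then have ty: "(t - y) + cj (t - y) = 0" using t y by simp
  have kd: "nm (t - y) \<in> Kd d" using nm_Kd[OF ty] P unfolding t_def y_def by simp
  have Gt: "G (nm t)" "G (nm y)" using t y G_nm by auto
  define c1 where "c1 = mmul k (ginv (nm t))"
  define c2 where "c2 = mmul z (ginv (nm y))"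
  have e1: "k = mmul c1 (nm t)" unfolding c1_def using Gt by simp
  have e2: "nm y = mmul (ginv c2) z" unfolding c2_def
    using Gt z by (simp add: ginv_mmul mmul_assoc ginv_left)
  have "nm t = mmul (nm y) (nm (t - y))" by (simp add: nm_mmul)
  then have "k = mmul c1 (mmul (mmul (ginv c2) z) (nm (t - y)))" using e1 e2 by simp
  then have "k = mmul (mmul c1 (ginv c2)) (mmul z (nm (t - y)))" by (simp add: mmul_assoc)
  then show ?thesis using DC_I[OF B_mmul[OF b1[folded c1_def] B_ginv[OF b2[folded c2_def]]] kd] by simp
qed

lemma cover: assumes "G g" shows "\<exists>j\<le>d. \<exists>\<beta>\<in>HB. g \<in> DC (mmul (xs j) \<beta>)"
proof -
  obtain b k where bk: "b \<in> B" "k \<in> K" "g = mmul b k" using iwasawa[OF assms] by blast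
  have Gk: "G k" using bk K_G by blast
  obtain a x c e where k: "k = M2 a x c e" by (cases k)
  have O: "Oi a" "Oi x" "Oi c" "Oi e" using bk k by (auto simp: K_iff)
  have iso: "c * cj e + e * cj c = 0" using G_bottom_iso Gk k by blast
  have eq1: "cj a * e + cj c * x = 1" using Gk k by (simp add: inG_iff)
  have "\<exists>j\<le>d. \<exists>\<beta>\<in>HB. k \<in> DC (mmul (xs j) \<beta>)"
  proof (cases "P 1 c")
    case False
    then have uc: "unit c" using O not_unit_P1 by blast
    have cnz: "c \<noteq> 0" using uc unit_nz by blast
    define z where "z = e / c - 1 / s"
    have zz: "z + cj z = 0"
    proof -
      have "e / c + cj (e / c) = (c * cj e + e * cj c) / (c * cj c)"
        using cnz by (simp add: cj_divide field_simps)
      moreover have "1 / s + cj (1 / s) = 0" using s_nz by (simp add: cj_simps)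
      ultimately show ?thesis using iso unfolding z_def by (simp add: cj_simps algebra_simps)
    qed
    have zO: "Oi z" unfolding z_def using P_div_unit[OF O(4) uc] P_div_unit[OF O_1 unit_s(1)] P_diff by blast
    have Gu: "G (um z)" using G_um zz by blast
    have "um z \<in> B" using Gu by (simp add: B_iff um_def)
    moreover have "um z \<in> K" using Gu zO by (simp add: K_iff um_def)
    ultimately have \<beta>: "um z \<in> HB" by blast
    let ?y = "mmul (xs 0) (um z)"
    have Gy: "G ?y" using xs_K \<beta> K_G G_mmul by blast
    have "mmul k (ginv ?y) \<in> B"
    proof (rule same_row_B[OF Gk Gy])
      show "ent21 k * ent22 ?y = ent22 k * ent21 ?y"
        using k cnz s_nz by (simp add: xs_def nm_def um_def z_def field_simps)
    qed
    then have "k \<in> DC ?y" using DC_I[OF _ Kd_I, of "mmul k (ginv ?y)" ?y] Gy by simp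
    then show ?thesis using \<beta> by blast
  next
    case True
    have ue: "unit e"
    proof (rule ccontr)
      assume "\<not> unit e"
      then have "P 1 e" using O not_unit_P1 by blast
      then have "P 1 (cj a * e + cj c * x)"
        using True O P_cj by (intro P_add P_Omult P_multO) auto
      then show False using eq1 unit_not_P1[OF unit_1] by simp
    qed
    have enz: "e \<noteq> 0" using ue unit_nz by blast
    define t where "t = c / e"
    have tp: "P 1 t" unfolding t_def using P_div_unit[OF True ue] .
    show ?thesis
    proof (cases "P d t")
      case True
      have "k \<in> DC (xs d)"
      proof (rule row_DC[OF Gk _ K_G[OF xs_K]])
        show "ent22 k \<noteq> 0" using k enz by simp
        show "ent22 (xs d) \<noteq> 0" by (simp add: xs_def nm_def)
        show "P d (ent21 k / ent22 k - ent21 (xs d) / ent22 (xs d))"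
          using True P_spj[of d] k unfolding t_def by (simp add: xs_def nm_def P_diff)
      qed
      then show ?thesis using B_I K_I by (intro exI[of _ d]) (auto intro!: bexI[of _ Imat])
    next
      case False
      have tnz: "t \<noteq> 0" using False by (auto simp: inP_def)
      define j where "j = nat (v t)"
      have vt: "v t = int j" "1 \<le> j" "j < d" using tp False tnz unfolding j_def by (auto simp: inP_def)
      define w where "w = t / (s * pi ^ j)"
      have t_cj: "t + cj t = 0" using row_ratio_B(2)[OF Gk] k enz unfolding t_def by simp
      have uw: "unit w" unfolding w_def unit_def using tnz spj_nz vt v_spj pi(1) by (simp add: v_divide)
      have ct: "cj t = - t" using t_cj by (simp add: add_eq_0_iff)
      have cw: "cj w = w" unfolding w_def by (simp add: cj_divide cj_mult cj_power ct cj_s pi(2))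
      obtain \<alpha> where \<alpha>: "unit \<alpha>" "P (Suc (d - j - 1)) (\<alpha> * cj \<alpha> - w)" using norm_approx[OF uw cw] by blast
      have dj: "Suc (d - j - 1) = d - j" using vt by simp
      have anz: "\<alpha> \<noteq> 0" using \<alpha> unit_nz by blast
      have Gta: "G (tm \<alpha>)" using G_tm anz by blast
      have "tm \<alpha> \<in> B" using Gta by (simp add: B_iff tm_def)
      moreover have "tm \<alpha> \<in> K" using Gta \<alpha> unit_O unit_inverse unit_cj by (simp add: K_iff tm_def)
      ultimately have \<beta>: "tm \<alpha> \<in> HB" by blast
      let ?z = "mmul (xs j) (tm \<alpha>)"
      have Gz: "G ?z" using xs_K \<beta> K_G G_mmul by blast
      have "k \<in> DC ?z"
      proof (rule row_DC[OF Gk _ Gz])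
        show "ent22 k \<noteq> 0" using k enz by simp
        show "ent22 ?z \<noteq> 0" using anz by (simp add: xs_def nm_def tm_def)
        have r: "ent21 ?z / ent22 ?z = s * pi ^ j * (\<alpha> * cj \<alpha>)"
          using anz by (simp add: xs_def nm_def tm_def field_simps)
        have "ent21 k / ent22 k - ent21 ?z / ent22 ?z = s * pi ^ j * (w - \<alpha> * cj \<alpha>)"
          unfolding r using k spj_nz pi(1) unfolding w_def t_def by (simp add: field_simps)
        moreover have "P (j + (d - j)) (s * pi ^ j * (w - \<alpha> * cj \<alpha>))"
          using P_mult[OF P_spj, of "d - j"] \<alpha>(2) dj by (metis P_uminus_iff minus_diff_eq)
        ultimately show "P d (ent21 k / ent22 k - ent21 ?z / ent22 ?z)" using vt by simp
      qed
      then show ?thesis using \<beta> vt by (intro exI[of _ j]) auto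
    qed
  qed
  then show ?thesis using bk DC_left by blast
qed

end

context U11 begin

definition goodS :: "nat \<Rightarrow> bool" where
  "goodS j \<longleftrightarrow> (\<forall>a. cj a = a \<and> unit a \<and> P j (a - 1) \<longrightarrow> chi a = 1)"

lemma xs_M2: "xs j = M2 1 0 (s * pi ^ j) 1" by (simp add: xs_def nm_def)
lemma ginv_xs: "ginv (xs j) = M2 1 0 (- (s * pi ^ j)) 1" by (simp add: xs_def nm_def cj_simps pi)

lemma chi_unit_split: assumes "a \<noteq> 0" "b \<noteq> 0" "c \<noteq> 0" shows "chi (a * b * c) = chi a * chi b * chi c"
  using assms chi_mult by simp

lemma good_xs: assumes jd: "j \<le> d" and gs: "goodS j" shows "good (xs j)"
  unfolding good_def
proof (intro ballI impI)
  fix \<beta> b k assume \<beta>: "\<beta> \<in> HB" and b: "b \<in> B" and k: "k \<in> Kd d"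
    and e: "mmul (xs j) \<beta> = mmul b (mmul (xs j) k)"
  define x where "x = xs j"
  define y where "y = s * pi ^ j"
  have xK: "x \<in> K" unfolding x_def using xs_K .
  have Gx: "G x" using xK K_G by blast
  have Gk: "G k" using k Kd_K K_G by blast
  have Gb: "G b" using b B_G by blast
  define k2 where "k2 = mmul x (mmul k (ginv x))"
  have k2: "k2 \<in> Kd d" unfolding k2_def using Kd_normal[OF xK k] .
  have "b = mmul (mmul x \<beta>) (ginv (mmul x k))"
    using e Gx Gk G_mmul unfolding x_def by (metis G_cancel_right)
  also have "\<dots> = mmul (mmul x (mmul \<beta> (ginv x))) (ginv k2)"
    unfolding k2_def using Gx by (simp add: ginv_mmul mmul_assoc)
  finally have bdef: "b = mmul (mmul x (mmul \<beta> (ginv x))) (ginv k2)" .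
  define \<kappa> where "\<kappa> = ginv k2"
  have \<kappa>: "\<kappa> \<in> Kd d" unfolding \<kappa>_def using Kd_ginv[OF k2] .
  obtain \<kappa>11 \<kappa>12 \<kappa>21 \<kappa>22 where kap: "\<kappa> = M2 \<kappa>11 \<kappa>12 \<kappa>21 \<kappa>22" by (cases \<kappa>)
  have kk: "P d (\<kappa>11 - 1)" "P d \<kappa>21" "Oi \<kappa>22"
    using \<kappa> kap by (auto simp: Kd_iff Imat_def K_iff)
  have u11: "unit \<kappa>11" using unit_perturb[of 1 "\<kappa>11 - 1"] P_mono[OF _ kk(1), of 1] dpos by simp
  obtain \<alpha> \<mu> \<delta> where bb: "\<beta> = M2 \<alpha> \<mu> 0 \<delta>" using B_M2 \<beta> by blast
  have bO: "Oi \<alpha>" "Oi \<mu>" "Oi \<delta>" using \<beta> bb by (auto simp: K_iff)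
  have ua: "unit \<alpha>" using BK_unit[of \<beta>] \<beta> bb by simp
  have anz: "\<alpha> \<noteq> 0" using ua unit_nz by blast
  have \<delta>: "\<delta> = inverse (cj \<alpha>)" "cj \<mu> * \<delta> + cj \<delta> * \<mu> = 0" using B_ent[of \<alpha> \<mu> \<delta>] \<beta> bb by auto
  have ud: "unit \<delta>" using \<delta>(1) ua unit_cj unit_inverse by simp
  define z where "z = \<mu> / \<alpha>"
  have zO: "Oi z" unfolding z_def using P_div_unit[OF bO(2) ua] .
  have cz: "cj z = - z"
  proof -
    have "cj \<mu> / cj \<alpha> + \<mu> / \<alpha> = 0" using \<delta> anz by (simp add: cj_inverse divide_inverse mult.commute)
    then have "cj \<mu> / cj \<alpha> = - (\<mu> / \<alpha>)" by (simp add: eq_neg_iff_add_eq_0)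
    then show ?thesis unfolding z_def by (simp only: cj_divide)
  qed
  have cy: "cj y = - y" unfolding y_def by (simp add: cj_simps pi)
  define a where "a = 1 - z * y"
  have ca: "cj a = a" unfolding a_def by (simp add: cj_simps cz cy)
  have Pa: "P j (a - 1)" unfolding a_def y_def using P_Omult[OF zO P_spj] by simp
  have bM: "b = mmul (M2 (\<alpha> - \<mu> * y) \<mu> (y * (\<alpha> - \<mu> * y - \<delta>)) (y * \<mu> + \<delta>)) \<kappa>"
    using bdef unfolding \<kappa>_def[symmetric] x_def bb xs_M2 ginv_xs y_def[symmetric]
    by (simp add: algebra_simps cy)
  have g11: "\<alpha> - \<mu> * y = \<alpha> * a" unfolding a_def z_def using anz by (simp add: field_simps)
  have e21: "y * (\<alpha> - \<mu> * y - \<delta>) * \<kappa>11 + (y * \<mu> + \<delta>) * \<kappa>21 = 0"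
    using bM kap b by (simp add: B_iff)
  have e11: "ent11 b = \<alpha> * a * \<kappa>11 + \<mu> * \<kappa>21" using bM kap g11 by simp
  have uaa: "unit a"
  proof (cases "j = 0")
    case False
    then have "P 1 (a - 1)" using P_mono[OF _ Pa, of 1] by simp
    then show ?thesis using unit_perturb'[OF unit_1] by blast
  next
    case True
    have yy: "y = s" unfolding y_def True by simp
    have "P d ((y * \<mu> + \<delta>) * \<kappa>21)" using P_Omult[OF _ kk(2)] bO O_s unfolding yy
      by (meson P_add P_mult[of 0 _ 0, simplified])
    then have h: "P d (y * (\<alpha> - \<mu> * y - \<delta>) * \<kappa>11)" using e21 by (metis P_uminus_iff add_eq_0_iff)
    define X where "X = \<alpha> - \<mu> * y - \<delta>"
    have h2: "P d ((y * X * \<kappa>11) / (s * \<kappa>11))"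
      using P_div_unit[OF h[folded X_def] unit_mult[OF unit_s(1) u11]] .
    have "(y * X * \<kappa>11) / (s * \<kappa>11) = X" unfolding yy using s_nz unit_nz[OF u11] by simp
    then have "P d (\<alpha> - \<mu> * y - \<delta>)" using h2 unfolding X_def by simp
    then have "P 1 (\<alpha> * a - \<delta>)" using g11 P_mono[of 1 d] dpos by simp
    then have "unit (\<alpha> * a)" using unit_perturb'[OF ud] by blast
    moreover have "Oi a"
    proof -
      have "P 0 (a - 1)" using Pa True by simp
      from P_add[OF this O_1] show ?thesis by simp
    qed
    ultimately show ?thesis using O_unit_factor[of a \<alpha>] bO by (simp add: mult.commute)
  qed
  have chia: "chi a = 1" using gs ca uaa Pa unfolding goodS_def by blast
  have uaa2: "unit (\<alpha> * a)" using unit_mult[OF ua uaa] .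
  define u where "u = \<kappa>11 + \<mu> * \<kappa>21 / (\<alpha> * a)"
  have e11': "ent11 b = \<alpha> * a * u" unfolding u_def e11 using anz unit_nz[OF uaa] by (simp add: field_simps)
  have Pu: "P d (u - 1)" unfolding u_def
  proof -
    have eq: "\<kappa>11 + \<mu> * \<kappa>21 / (\<alpha> * a) - 1 = (\<kappa>11 - 1) + \<mu> * \<kappa>21 / (\<alpha> * a)" by simp
    have "P d (\<mu> * \<kappa>21 / (\<alpha> * a))" using P_div_unit[OF P_Omult[OF bO(2) kk(2)] uaa2] .
    from P_add[OF kk(1) this] show "P d (\<kappa>11 + \<mu> * \<kappa>21 / (\<alpha> * a) - 1)" unfolding eq .
  qed
  have unz: "u \<noteq> 0" using e11' ent11_B_nz[OF b] by auto
  have "cB b = chi \<alpha> * chi a * chi u"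
    unfolding cB_def e11' using chi_unit_split anz unit_nz[OF uaa] unz by blast
  then show "cB \<beta> = cB b" using chia trivd[OF unz Pu] bb by (simp add: cB_def)
qed

lemma bad_xs: assumes jd: "j \<le> d" and ngs: "\<not> goodS j"
  shows "\<exists>\<beta>\<in>HB. \<exists>b\<in>B. \<exists>k\<in>Kd d. mmul (xs j) \<beta> = mmul b (mmul (xs j) k) \<and> cB \<beta> \<noteq> cB b"
proof -
  obtain a where a: "cj a = a" "unit a" "P j (a - 1)" "chi a \<noteq> 1" using ngs unfolding goodS_def by blast
  have anz: "a \<noteq> 0" using a unit_nz by blast
  have jlt: "j < d"
  proof (rule ccontr)
    assume "\<not> j < d" then have "j = d" using jd by simp
    then show False using trivd[OF anz] a by simp
  qed
  define x where "x = xs j"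
  define y where "y = s * pi ^ j"
  have cy: "cj y = - y" unfolding y_def by (simp add: cj_simps pi)
  have xK: "x \<in> K" unfolding x_def using xs_K .
  have Gx: "G x" using xK K_G by blast
  define t where "t = (1 - a) / (eps * pi ^ j)"
  have tO: "Oi t"
  proof -
    have "P j (1 - a)" using a(3) by (metis P_uminus_iff minus_diff_eq)
    then have "Oi ((1 - a) / pi ^ j)" using P_pi_factor by blast
    then have "Oi ((1 - a) / pi ^ j / eps)" using P_div_unit[OF _ unit_s(2)] by blast
    then show ?thesis unfolding t_def by (simp add: mult.commute)
  qed
  have ct: "cj t = t" unfolding t_def using a(1) by (simp add: cj_simps pi)
  define z where "z = s * t"
  have zz: "z + cj z = 0" unfolding z_def by (simp add: cj_simps ct)
  have zO: "Oi z" unfolding z_def using P_Omult[OF O_s(1) tO] .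
  have zy: "z * y = 1 - a" unfolding z_def y_def t_def using pi(1) eps_nz
    by (simp add: field_simps ss[symmetric])
  obtain m where m: "d - j = Suc m" using jlt by (metis Suc_diff_Suc)
  have uia: "unit (inverse a)" "cj (inverse a) = inverse a" using a unit_inverse by (auto simp: cj_inverse)
  obtain \<alpha> where \<alpha>: "unit \<alpha>" "P (d - j) (\<alpha> * cj \<alpha> - inverse a)"
    using norm_approx[OF uia, of m] m by auto
  have alnz: "\<alpha> \<noteq> 0" using \<alpha> unit_nz by blast
  define \<beta> where "\<beta> = mmul (tm \<alpha>) (um z)"
  have Gb: "G \<beta>" unfolding \<beta>_def using G_mmul G_tm G_um alnz zz by blast
  have bM: "\<beta> = M2 \<alpha> (\<alpha> * z) 0 (inverse (cj \<alpha>))" unfolding \<beta>_def by (simp add: tm_def um_def)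
  have \<beta>HB: "\<beta> \<in> HB" using Gb \<alpha> zO unit_O unit_inverse unit_cj unfolding bM
    by (simp add: B_iff K_iff P_mult[of 0 _ 0, simplified])
  define g where "g = mmul x (mmul \<beta> (ginv x))"
  have gK: "g \<in> K" unfolding g_def using K_mmul xK \<beta>HB K_ginv by blast
  have Gg: "G g" using gK K_G by blast
  have gM: "g = M2 (\<alpha> * a) (\<alpha> * z) (y * (\<alpha> * a - inverse (cj \<alpha>))) (y * \<alpha> * z + inverse (cj \<alpha>))"
  proof -
    have "g = M2 (\<alpha> - \<alpha> * z * y) (\<alpha> * z) (y * (\<alpha> - \<alpha> * z * y - inverse (cj \<alpha>))) (y * \<alpha> * z + inverse (cj \<alpha>))"
      unfolding g_def x_def bM xs_M2 ginv_xs y_def[symmetric] by (simp add: algebra_simps cy)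
    moreover have "\<alpha> * a = \<alpha> * (1 - z * y)" using zy by simp
    then have "\<alpha> - \<alpha> * z * y = \<alpha> * a" by (simp add: algebra_simps)
    ultimately show ?thesis by simp
  qed
  have P21: "P d (y * (\<alpha> * a - inverse (cj \<alpha>)))"
  proof -
    have eqa: "\<alpha> * a - inverse (cj \<alpha>) = inverse (cj \<alpha>) * a * (\<alpha> * cj \<alpha> - inverse a)"
      using alnz anz by (simp add: field_simps cj_eq0)
    have oo: "Oi (inverse (cj \<alpha>) * a)" using unit_O[OF unit_mult[OF unit_inverse[OF unit_cj[OF \<alpha>(1)]] a(2)]] .
    have "P (d - j) (inverse (cj \<alpha>) * a * (\<alpha> * cj \<alpha> - inverse a))" by (rule P_Omult[OF oo \<alpha>(2)])
    then have "P (d - j) (\<alpha> * a - inverse (cj \<alpha>))" unfolding eqa .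
    then have "P (j + (d - j)) (y * (\<alpha> * a - inverse (cj \<alpha>)))" unfolding y_def by (rule P_mult[OF P_spj])
    moreover have "j + (d - j) = d" using jlt by simp
    ultimately show ?thesis by simp
  qed
  define g21 where "g21 = y * (\<alpha> * a - inverse (cj \<alpha>))"
  define g22 where "g22 = y * \<alpha> * z + inverse (cj \<alpha>)"
  have gO: "Oi (\<alpha> * a)" "Oi (\<alpha> * z)" "Oi g22"
    using gK unfolding gM g22_def by (auto simp: K_iff)
  have ug22: "unit g22"
  proof -
    have "unit (mdet g)" using K_det_unit[OF gK] .
    then have "unit (\<alpha> * a * g22 - \<alpha> * z * g21)" unfolding gM g21_def g22_def by simp
    moreover have "P 1 (\<alpha> * z * g21)"
      using P_Omult[OF gO(2) P_mono[OF _ P21, of 1]] dpos unfolding g21_def by simp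
    ultimately have "unit (\<alpha> * a * g22)" using unit_perturb[of _ "\<alpha> * z * g21"] by fastforce
    then show ?thesis using O_unit_factor[of g22 "\<alpha> * a"] gO by (simp add: mult.commute)
  qed
  have g22nz: "g22 \<noteq> 0" using ug22 unit_nz by blast
  define \<tau> where "\<tau> = g21 / g22"
  have e22: "ent22 g \<noteq> 0" using g22nz unfolding gM g22_def by simp
  have \<tau>e: "\<tau> = ent21 g / ent22 g" unfolding \<tau>_def gM g21_def g22_def by simp
  have bB: "mmul g (ginv (nm \<tau>)) \<in> B" and \<tau>z: "\<tau> + cj \<tau> = 0" using row_ratio_B[OF Gg e22] \<tau>e by auto
  have P\<tau>: "P d \<tau>" unfolding \<tau>_def using P_div_unit[OF P21[folded g21_def] ug22] .
  have \<kappa>: "nm \<tau> \<in> Kd d" using nm_Kd[OF \<tau>z P\<tau>] .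
  define b where "b = mmul g (ginv (nm \<tau>))"
  define k where "k = mmul (ginv x) (mmul (nm \<tau>) x)"
  have kd: "k \<in> Kd d" unfolding k_def using Kd_normal'[OF xK \<kappa>] .
  have Gn: "G (nm \<tau>)" using \<tau>z G_nm by blast
  have eq: "mmul x \<beta> = mmul b (mmul x k)"
    unfolding b_def k_def g_def using Gx Gn by (simp add: mmul_assoc ginv_left)
  have e11: "ent11 b = \<alpha> * a * (1 - z * \<tau> / a)"
    unfolding b_def gM ginv_nm using \<tau>z anz by (simp add: nm_def field_simps add_eq_0_iff)
  have Pz: "P d (z * \<tau> / a)" using P_div_unit[OF P_Omult[OF zO P\<tau>] a(2)] .
  have u1: "unit (1 - z * \<tau> / a)"
    using unit_perturb[OF unit_1, of "- (z * \<tau> / a)"] P_mono[OF _ Pz, of 1] dpos by simp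
  have "chi (1 - z * \<tau> / a) = 1"
    using trivd[of "1 - z * \<tau> / a"] unit_nz[OF u1] Pz by simp
  then have "cB b = chi \<alpha> * chi a"
    unfolding cB_def e11 using chi_mult alnz anz unit_nz[OF u1] by simp
  moreover have "cB \<beta> = chi \<alpha>" unfolding cB_def bM by simp
  ultimately have "cB \<beta> \<noteq> cB b" using a(4) chi_nz[OF alnz] by simp
  moreover have "b \<in> B" using bB unfolding b_def .
  ultimately show ?thesis using \<beta>HB kd eq unfolding x_def by blast
qed

theorem main_count: "cdimH Hom = card {j. j \<le> d \<and> goodS j}"
  apply (rule dim_thm[where xs = xs and J = "{j. j \<le> d \<and> goodS j}", OF fin_CS])
  subgoal by (rule xs_K)
  subgoal by auto
  subgoal by (rule good_xs) auto
  subgoal by (rule bad_xs) auto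
  subgoal by (rule cover)
  subgoal by (rule sep)
  done

end

theorem proposition4p4:
  fixes cj :: "'e::field \<Rightarrow> 'e" and v :: "'e \<Rightarrow> int" and eps s :: 'e
    and chi :: "'e \<Rightarrow> complex" and r d :: nat
  assumes "unram_setup cj v eps s"
    and "is_char chi"
    and "minimal_depth cj v chi r"
    and "d \<ge> r + 1"
  shows "cdimH (HomK cj v (Vfix cj v chi d)) =
           (if r = 0 \<and> (\<forall>a. cj a = a \<and> Tmem v 0 a \<longrightarrow> chi a = 1) then d + 1 else d - r)"
proof -
  interpret vs cj v eps s using assms(1) by (unfold_locales)
  have hdT: "has_depth (\<lambda>_. True) v chi r" and hdF: "has_depth (\<lambda>a. cj a = a) v chi r"
    using assms(3) by (auto simp: minimal_depth_def)
  have dpos: "1 \<le> d" using assms(4) by simp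
  have Tmem0: "Tmem v 0 a \<longleftrightarrow> unit a" for a by (simp add: Tmem_def unit_def)
  have TmemS: "Tmem v (Suc n) a \<longleftrightarrow> a \<noteq> 0 \<and> P (Suc n) (a - 1)" for n a by (simp add: Tmem_def)
  have trivd: "chi a = 1" if a: "a \<noteq> 0" "inP v d (a - 1)" for a
  proof -
    consider (c1) "\<forall>a. Tmem v (Suc r) a \<longrightarrow> chi a = 1" | (c2) "r = 0" "\<forall>a. Tmem v 0 a \<longrightarrow> chi a = 1"
      using hdT unfolding has_depth_def by auto
    then show ?thesis
    proof cases
      case c1
      have "P (Suc r) (a - 1)" using P_mono[OF _ a(2)] assms(4) by simp
      then show ?thesis using c1 a(1) TmemS by blast
    next
      case c2
      have "P 1 (a - 1)" using P_mono[OF _ a(2)] dpos by simp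
      then have "unit a" using unit_perturb'[OF unit_1] by blast
      then show ?thesis using c2 Tmem0 by blast
    qed
  qed
  interpret U: U11 cj v eps s chi d
    by unfold_locales (use assms(2) dpos trivd in auto)
  have main: "cdimH (HomK cj v (Vfix cj v chi d)) = card {j. j \<le> d \<and> U.goodS j}"
    by (rule U.main_count)
  show ?thesis
  proof (cases "r = 0 \<and> (\<forall>a. cj a = a \<and> Tmem v 0 a \<longrightarrow> chi a = 1)")
    case True
    then have "U.goodS j" for j unfolding U.goodS_def using Tmem0 by blast
    then have "{j. j \<le> d \<and> U.goodS j} = {..d}" by auto
    then show ?thesis using main True by simp
  next
    case False
    then obtain a0 where a0: "cj a0 = a0" "Tmem v r a0" "chi a0 \<noteq> 1"
      and H: "\<forall>a. cj a = a \<and> Tmem v (Suc r) a \<longrightarrow> chi a = 1"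
      using hdF unfolding has_depth_def by blast
    have ua0: "unit a0"
    proof (cases r)
      case 0 then show ?thesis using a0(2) Tmem0 by simp
    next
      case (Suc n)
      then have "P 1 (a0 - 1)" using a0(2) TmemS P_mono[of 1 "Suc n"] by auto
      then show ?thesis using unit_perturb'[OF unit_1] by blast
    qed
    have "{j. j \<le> d \<and> U.goodS j} = {Suc r..d}"
    proof (intro set_eqI iffI)
      fix j assume j: "j \<in> {j. j \<le> d \<and> U.goodS j}"
      have "Suc r \<le> j"
      proof (rule ccontr)
        assume "\<not> Suc r \<le> j"
        then have jr: "j \<le> r" by simp
        have "P j (a0 - 1)"
        proof (cases r)
          case 0
          then have "j = 0" using jr by simp
          then show ?thesis using P_diff[OF unit_O[OF ua0] O_1] by simp
        next
          case (Suc n)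
          then have "P r (a0 - 1)" using a0(2) TmemS by auto
          then show ?thesis using P_mono[OF jr] by blast
        qed
        then have "chi a0 = 1" using j a0(1) ua0 unfolding U.goodS_def by blast
        then show False using a0(3) by simp
      qed
      then show "j \<in> {Suc r..d}" using j by simp
    next
      fix j assume j: "j \<in> {Suc r..d}"
      have "U.goodS j" unfolding U.goodS_def
      proof (intro allI impI)
        fix a assume a: "cj a = a \<and> unit a \<and> P j (a - 1)"
        have "P (Suc r) (a - 1)" using a P_mono[of "Suc r" j] j by auto
        then have "Tmem v (Suc r) a" using a unit_nz TmemS by blast
        then show "chi a = 1" using H a by blast
      qed
      then show "j \<in> {j. j \<le> d \<and> U.goodS j}" using j by simp
    qed
    then show ?thesis using main False by simp
  qed
qed


end
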